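(* Let $C\subset\mathbb{R}^n$ be a closed convex pointed cone and let $\mathcal{A}$ and $\mathcal{B}$ be two nonempty compact subsets of the same part of $\operatorname{End}(\operatorname{Int}C)$. Then for every $h>0$ there exist finite subsets $\mathcal{A}_f\subset\mathcal{A}$ and $\mathcal{B}_f\subset\mathcal{B}$ such that $|\rho(\mathcal{A},\mathcal{B})-\rho(\mathcal{A}_f,\mathcal{B}_f)|\le h$.
   Context: For $x,y\in\mathbb{R}^n$, $x\le_C y$ means $y-x\in C$. On $\operatorname{Int}C$ the Funk hemi-metric is $\operatorname{Funk}(x,y)=\log\inf\{\lambda>0: x\le_C\lambda y\}$. $\operatorname{End}(\operatorname{Int}C)$ is the set of linear maps (real $n\times n$ matrices acting on row vectors by $x\mapsto xA$) with $(\operatorname{Int}C)A\subset\operatorname{Int}C$, ordered by $A\le A'$ iff $xA\le_C xA'$ for all $x\in\operatorname{Int}C$. A part of $\operatorname{End}(\operatorname{Int}C)$ is an equivalence class for comparability ($A,A'$ comparable iff $\mu A\le A'\le\lambda A$ for some $\mu,\lambda>0$); on a part compactness refers to the Thompson metric $d_T(A,A')=\max(\operatorname{Funk}(A,A'),\operatorname{Funk}(A',A))$ with $\operatorname{Funk}(A,A')=\log\inf\{\lambda>0:A\le\lambda A'\}$. For nonempty compact $\mathcal{A},\mathcal{B}$ in a part, $\rho(\mathcal{A},\mathcal{B})$ is the value of the escape rate game on $\operatorname{Int}C$: starting from $x_0\in\operatorname{Int}C$, at each turn $k\ge1$ Min chooses $A_k\in\mathcal{A}$, then Max, after observing it, chooses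 $B_k\in\mathcal{B}$, and $x_k=x_{k-1}A_kB_k$. Strategies map finite histories to actions; payoff $J(\sigma,\tau)=\limsup_k\frac1k\operatorname{Funk}(x_k,x_0)$, minimized by Min and maximized by Max. The value is the $\lambda$ such that for every $\epsilon>0$ there exist strategies $\sigma^*,\tau^*$ with $J(\sigma^*,\tau)\le\lambda+\epsilon$ and $J(\sigma,\tau^* )\ge\lambda-\epsilon$ for all $\sigma,\tau$. *)

theory Defs
  imports "HOL-Analysis.Analysis" "HOL-Library.Extended_Real"
begin

type_synonym 'n mat = "real ^ 'n ^ 'n"

definition cone_le :: "(real ^ 'n) set \<Rightarrow> real ^ 'n \<Rightarrow> real ^ 'n \<Rightarrow> bool" where
  "cone_le C x y \<longleftrightarrow> y - x \<in> C"

definition pointed_cone :: "(real ^ 'n) set \<Rightarrow> bool" where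
  "pointed_cone C \<longleftrightarrow> cone C \<and> C \<inter> uminus ` C \<subseteq> {0}"

definition funk :: "(real ^ 'n) set \<Rightarrow> real ^ 'n \<Rightarrow> real ^ 'n \<Rightarrow> real" where
  "funk C x y = ln (Inf {l. l > 0 \<and> cone_le C x (l *\<^sub>R y)})"

text \<open>Linear maps act on row vectors: x \<mapsto> x A.\<close>
definition End_int :: "(real ^ 'n) set \<Rightarrow> 'n mat set" where
  "End_int C = {A. \<forall>x \<in> interior C. x v* A \<in> interior C}"

definition end_le :: "(real ^ 'n) set \<Rightarrow> 'n mat \<Rightarrow> 'n mat \<Rightarrow> bool" where
  "end_le C A A' \<longleftrightarrow> (\<forall>x \<in> interior C. cone_le C (x v* A) (x v* A'))"

definition comparable :: "(real ^ 'n) set \<Rightarrow> 'n mat \<Rightarrow> 'n mat \<Rightarrow> bool" where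
  "comparable C A A' \<longleftrightarrow>
     (\<exists>\<mu>>0. \<exists>c>0. end_le C (\<mu> *\<^sub>R A) A' \<and> end_le C A' (c *\<^sub>R A))"

definition in_same_part :: "(real ^ 'n) set \<Rightarrow> 'n mat set \<Rightarrow> bool" where
  "in_same_part C S \<longleftrightarrow> S \<subseteq> End_int C \<and> (\<forall>A\<in>S. \<forall>A'\<in>S. comparable C A A')"

definition funk_end :: "(real ^ 'n) set \<Rightarrow> 'n mat \<Rightarrow> 'n mat \<Rightarrow> real" where
  "funk_end C A A' = ln (Inf {l. l > 0 \<and> end_le C A (l *\<^sub>R A')})"

definition thompson :: "(real ^ 'n) set \<Rightarrow> 'n mat \<Rightarrow> 'n mat \<Rightarrow> real" where
  "thompson C A A' = max (funk_end C A A') (funk_end C A' A)"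

text \<open>Compactness w.r.t. the Thompson metric (sequential compactness, equivalent in metric spaces).\<close>
definition thompson_compact :: "(real ^ 'n) set \<Rightarrow> 'n mat set \<Rightarrow> bool" where
  "thompson_compact C S \<longleftrightarrow>
     (\<forall>f::nat \<Rightarrow> 'n mat. (\<forall>k. f k \<in> S) \<longrightarrow>
        (\<exists>l\<in>S. \<exists>r. strict_mono r \<and> (\<lambda>k. thompson C (f (r k)) l) \<longlonglongrightarrow> 0))"

text \<open>Histories: lists of (A_k, B_k). Min strategy: history \<Rightarrow> action;
  Max strategy: history \<Rightarrow> Min's current action \<Rightarrow> action.\<close>
type_synonym 'n min_strat = "('n mat \<times> 'n mat) list \<Rightarrow> 'n mat"
type_synonym 'n max_strat = "('n mat \<times> 'n mat) list \<Rightarrow> 'n mat \<Rightarrow> 'n mat"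

primrec hist :: "'n min_strat \<Rightarrow> 'n max_strat \<Rightarrow> nat \<Rightarrow> ('n mat \<times> 'n mat) list" where
  "hist \<sigma> \<tau> 0 = []"
| "hist \<sigma> \<tau> (Suc k) = hist \<sigma> \<tau> k @ [(\<sigma> (hist \<sigma> \<tau> k), \<tau> (hist \<sigma> \<tau> k) (\<sigma> (hist \<sigma> \<tau> k)))]"

primrec state :: "real ^ 'n \<Rightarrow> 'n min_strat \<Rightarrow> 'n max_strat \<Rightarrow> nat \<Rightarrow> real ^ 'n" where
  "state x0 \<sigma> \<tau> 0 = x0"
| "state x0 \<sigma> \<tau> (Suc k) =
     (state x0 \<sigma> \<tau> k v* \<sigma> (hist \<sigma> \<tau> k)) v* \<tau> (hist \<sigma> \<tau> k) (\<sigma> (hist \<sigma> \<tau> k))"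

definition payoff :: "(real ^ 'n) set \<Rightarrow> real ^ 'n \<Rightarrow> 'n min_strat \<Rightarrow> 'n max_strat \<Rightarrow> ereal" where
  "payoff C x0 \<sigma> \<tau> = limsup (\<lambda>k. ereal (funk C (state x0 \<sigma> \<tau> k) x0 / real k))"

definition is_min_strat :: "'n mat set \<Rightarrow> 'n min_strat \<Rightarrow> bool" where
  "is_min_strat A \<sigma> \<longleftrightarrow> (\<forall>h. \<sigma> h \<in> A)"

definition is_max_strat :: "'n mat set \<Rightarrow> 'n max_strat \<Rightarrow> bool" where
  "is_max_strat B \<tau> \<longleftrightarrow> (\<forall>h a. \<tau> h a \<in> B)"

definition is_game_value :: "(real ^ 'n) set \<Rightarrow> 'n mat set \<Rightarrow> 'n mat set \<Rightarrow> real ^ 'n \<Rightarrow> real \<Rightarrow> bool" where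
  "is_game_value C A B x0 v \<longleftrightarrow>
     (\<forall>\<epsilon>>0. \<exists>\<sigma>s \<tau>s. is_min_strat A \<sigma>s \<and> is_max_strat B \<tau>s \<and>
        (\<forall>\<tau>. is_max_strat B \<tau> \<longrightarrow> payoff C x0 \<sigma>s \<tau> \<le> ereal (v + \<epsilon>)) \<and>
        (\<forall>\<sigma>. is_min_strat A \<sigma> \<longrightarrow> payoff C x0 \<sigma> \<tau>s \<ge> ereal (v - \<epsilon>)))"

end

theory Submission
  imports Defs
begin


lemma vm_diff: "((x::real^'n) - y) v* (A::'n mat) = x v* A - y v* A"
  by (metis matrix_vector_mult_diff_distrib transpose_matrix_vector)
lemma vm_add: "((x::real^'n) + y) v* (A::'n mat) = x v* A + y v* A"
  by (metis matrix_vector_right_distrib transpose_matrix_vector)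
lemma vm_scale: "((t::real) *\<^sub>R (x::real^'n)) v* (A::'n mat) = t *\<^sub>R (x v* A)"
  by (metis matrix_vector_mult_scaleR transpose_matrix_vector)
lemma vm_cont: "continuous_on S (\<lambda>x::real^'n. x v* (A::'n mat))"
proof -
  have "(\<lambda>x::real^'n. x v* A) = (\<lambda>x. transpose A *v x)" by simp
  then show ?thesis by (metis linear_continuous_on matrix_vector_mul_bounded_linear)
qed

definition Nf :: "(real ^ 'n) set \<Rightarrow> real ^ 'n \<Rightarrow> real ^ 'n \<Rightarrow> real" where
  "Nf C x0 y = Inf {l. l > 0 \<and> cone_le C y (l *\<^sub>R x0)}"

lemma funk_Nf: "funk C y x0 = ln (Nf C x0 y)"
  by (simp add: funk_def Nf_def)

locale cset =
  fixes C :: "(real ^ 'n) set"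
  assumes clo: "closed C" and cvx: "convex C" and pc: "pointed_cone C" and ne: "interior C \<noteq> {}"
begin

lemma C_add: "a \<in> C \<Longrightarrow> b \<in> C \<Longrightarrow> a + b \<in> C"
  using convex_cone[of C] cvx pc unfolding pointed_cone_def by blast
lemma C_scale: "a \<in> C \<Longrightarrow> 0 \<le> t \<Longrightarrow> t *\<^sub>R a \<in> C"
  using pc unfolding pointed_cone_def cone_def by blast
lemma intC: "interior C \<subseteq> C" by (rule interior_subset)
lemma C_zero: "0 \<in> C"
proof -
  obtain y where "y \<in> interior C" using ne by blast
  then have "y \<in> C" using intC by blast
  from C_scale[OF this, of 0] show ?thesis by simp
qed
lemma pointed: "a \<in> C \<Longrightarrow> -a \<in> C \<Longrightarrow> a = 0"
proof -
  assume a: "a \<in> C" "-a \<in> C"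
  then have "a \<in> uminus ` C" by (metis image_eqI minus_minus)
  with a pc show ?thesis unfolding pointed_cone_def by blast
qed
lemma zero_notin_int: "0 \<notin> interior C"
proof
  assume "0 \<in> interior C"
  then obtain r where r: "r > 0" "ball 0 r \<subseteq> C" using mem_interior by blast
  have "ball 0 r \<subseteq> {0::real^'n}"
  proof
    fix v assume v: "v \<in> ball (0::real^'n) r"
    then have "-v \<in> ball 0 r" by simp
    with v r show "v \<in> {0}" using pointed by blast
  qed
  then have "0 \<in> interior {0::real^'n}" using r by (metis centre_in_ball interior_maximal open_ball subsetD)
  then show False by simp
qed

lemma le_refl: "cone_le C x x" by (simp add: cone_le_def C_zero)
lemma le_trans: "cone_le C x y \<Longrightarrow> cone_le C y z \<Longrightarrow> cone_le C x z"
  unfolding cone_le_def using C_add by (metis diff_add_cancel add_diff_eq)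
lemma le_scale: "cone_le C x y \<Longrightarrow> 0 \<le> t \<Longrightarrow> cone_le C (t *\<^sub>R x) (t *\<^sub>R y)"
  unfolding cone_le_def using C_scale by (metis scaleR_diff_right)
lemma le_add: "cone_le C a b \<Longrightarrow> cone_le C c d \<Longrightarrow> cone_le C (a + c) (b + d)"
  unfolding cone_le_def using C_add by (metis add_diff_add)
lemma le_scalar: "x0 \<in> interior C \<Longrightarrow> cone_le C (s *\<^sub>R x0) (t *\<^sub>R x0) \<Longrightarrow> s \<le> t"
proof (rule ccontr)
  assume x0: "x0 \<in> interior C" and le: "cone_le C (s *\<^sub>R x0) (t *\<^sub>R x0)" and n: "\<not> s \<le> t"
  have "(s - t) *\<^sub>R x0 \<in> C" using C_scale[of x0 "s - t"] x0 intC n by auto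
  moreover have "- ((s - t) *\<^sub>R x0) \<in> C" using le by (simp add: cone_le_def algebra_simps)
  ultimately have "(s - t) *\<^sub>R x0 = 0" using pointed by blast
  then have "x0 = 0" using n by simp
  then show False using x0 zero_notin_int by simp
qed
lemma le_scalar_mono: "x0 \<in> interior C \<Longrightarrow> s \<le> t \<Longrightarrow> cone_le C (s *\<^sub>R x0) (t *\<^sub>R x0)"
  using C_scale[of x0 "t - s"] intC by (auto simp: cone_le_def algebra_simps)

lemma int_lower: "y \<in> interior C \<Longrightarrow> \<exists>\<beta>>0. cone_le C (\<beta> *\<^sub>R v) y"
proof -
  assume "y \<in> interior C"
  then obtain r where r: "r > 0" "ball y r \<subseteq> C" using mem_interior by blast
  define \<beta> where "\<beta> = r / (2 * (norm v + 1))"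
  have d: "0 < 2 * (norm v + 1)" using norm_ge_zero[of v] by smt
  have b: "\<beta> > 0" unfolding \<beta>_def using r(1) d by (rule divide_pos_pos)
  have "\<beta> * norm v < r"
  proof -
    have "\<beta> * norm v \<le> \<beta> * (norm v + 1)" using b by simp
    also have "\<dots> = r / 2" unfolding \<beta>_def using d by (simp add: field_simps)
    finally show ?thesis using r by simp
  qed
  then have "y - \<beta> *\<^sub>R v \<in> ball y r" using b by (simp add: dist_norm)
  then have "y - \<beta> *\<^sub>R v \<in> C" using r by blast
  then show ?thesis using b by (auto simp: cone_le_def)
qed
lemma int_upper: "x0 \<in> interior C \<Longrightarrow> \<exists>l>0. cone_le C v (l *\<^sub>R x0)"
proof -
  assume "x0 \<in> interior C"
  then obtain \<beta> where b: "\<beta> > 0" "cone_le C (\<beta> *\<^sub>R v) x0" using int_lower by blast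
  have "cone_le C ((1/\<beta>) *\<^sub>R (\<beta> *\<^sub>R v)) ((1/\<beta>) *\<^sub>R x0)" using le_scale[OF b(2), of "1/\<beta>"] b by simp
  then have "cone_le C v ((1/\<beta>) *\<^sub>R x0)" using b by simp
  then show ?thesis using b by (intro exI[of _ "1/\<beta>"]) auto
qed
lemma int_scale: "y \<in> interior C \<Longrightarrow> t > 0 \<Longrightarrow> t *\<^sub>R y \<in> interior C"
proof -
  assume y: "y \<in> interior C" and t: "t > 0"
  then obtain r where r: "r > 0" "ball y r \<subseteq> C" using mem_interior by blast
  have "ball (t *\<^sub>R y) (t * r) \<subseteq> C"
  proof
    fix w assume "w \<in> ball (t *\<^sub>R y) (t * r)"
    then have "norm (t *\<^sub>R y - w) < t * r" by (simp add: dist_norm)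
    moreover have "t *\<^sub>R y - w = t *\<^sub>R (y - (1/t) *\<^sub>R w)" using t by (simp add: algebra_simps)
    ultimately have "t * norm (y - (1/t) *\<^sub>R w) < t * r" using t by simp
    then have "norm (y - (1/t) *\<^sub>R w) < r" using t by simp
    then have "(1/t) *\<^sub>R w \<in> C" using r by (auto simp: dist_norm)
    from C_scale[OF this, of t] t show "w \<in> C" by simp
  qed
  then show ?thesis using r t by (meson mem_interior mult_pos_pos)
qed
lemma int_add: "y \<in> interior C \<Longrightarrow> cone_le C y z \<Longrightarrow> z \<in> interior C"
proof -
  assume y: "y \<in> interior C" and le: "cone_le C y z"
  then obtain r where r: "r > 0" "ball y r \<subseteq> C" using mem_interior by blast
  have "ball z r \<subseteq> C"
  proof
    fix w assume "w \<in> ball z r"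
    then have "w - (z - y) \<in> ball y r" by (simp add: dist_norm algebra_simps)
    then have "w - (z - y) \<in> C" using r by blast
    from C_add[OF this, of "z - y"] le show "w \<in> C" by (simp add: cone_le_def)
  qed
  then show ?thesis using r mem_interior by blast
qed

lemma closure_int: "closure (interior C) = C"
  using convex_closure_interior[OF cvx ne] clo closure_closed by simp

lemma End_C: "A \<in> End_int C \<Longrightarrow> y \<in> C \<Longrightarrow> y v* A \<in> C"
proof -
  assume A: "A \<in> End_int C" and y: "y \<in> C"
  have "(\<lambda>x. x v* A) ` interior C \<subseteq> C" using A intC unfolding End_int_def by blast
  from image_closure_subset[OF vm_cont clo this] y closure_int show ?thesis by blast
qed
lemma End_mono: "A \<in> End_int C \<Longrightarrow> cone_le C y z \<Longrightarrow> cone_le C (y v* A) (z v* A)"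
  unfolding cone_le_def by (metis End_C vm_diff)
lemma End_int: "A \<in> End_int C \<Longrightarrow> y \<in> interior C \<Longrightarrow> y v* A \<in> interior C"
  unfolding End_int_def by blast

lemma N_prop:
  assumes x0: "x0 \<in> interior C" and y: "y \<in> interior C"
  shows "Nf C x0 y > 0" "cone_le C y (Nf C x0 y *\<^sub>R x0)"
    "\<And>l. l > 0 \<Longrightarrow> cone_le C y (l *\<^sub>R x0) \<Longrightarrow> Nf C x0 y \<le> l"
proof -
  define S where "S = {l. l > 0 \<and> cone_le C y (l *\<^sub>R x0)}"
  have ne: "S \<noteq> {}" using int_upper[OF x0, of y] by (auto simp: S_def)
  have bdd: "bdd_below S" unfolding S_def by (rule bdd_belowI[of _ 0]) auto
  have "Inf S \<in> closure S" using closure_contains_Inf[OF ne bdd] .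
  moreover have "closure S \<subseteq> {l. cone_le C y (l *\<^sub>R x0)} \<inter> {0..}"
  proof (rule closure_minimal)
    show "S \<subseteq> {l. cone_le C y (l *\<^sub>R x0)} \<inter> {0..}" by (auto simp: S_def)
    have "{l. cone_le C y (l *\<^sub>R x0)} = (\<lambda>l. l *\<^sub>R x0 - y) -` C" by (auto simp: cone_le_def)
    moreover have "closed ((\<lambda>l::real. l *\<^sub>R x0 - y) -` C)"
      by (rule continuous_closed_vimage[OF clo]) (intro continuous_intros)
    ultimately show "closed ({l. cone_le C y (l *\<^sub>R x0)} \<inter> {0::real..})" by (simp add: closed_Int)
  qed
  ultimately have I: "cone_le C y (Inf S *\<^sub>R x0)" "Inf S \<ge> 0" by auto
  have "Inf S \<noteq> 0"
  proof
    assume "Inf S = 0"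
    then have "-y \<in> C" using I by (simp add: cone_le_def)
    then have "y = 0" using pointed y intC by blast
    then show False using y zero_notin_int by simp
  qed
  then show "Nf C x0 y > 0" "cone_le C y (Nf C x0 y *\<^sub>R x0)" using I by (auto simp: Nf_def S_def[symmetric])
  show "\<And>l. l > 0 \<Longrightarrow> cone_le C y (l *\<^sub>R x0) \<Longrightarrow> Nf C x0 y \<le> l"
    unfolding Nf_def S_def[symmetric] using bdd by (auto intro: cInf_lower simp: S_def)
qed

lemma N_mono: "x0 \<in> interior C \<Longrightarrow> y \<in> interior C \<Longrightarrow> z \<in> interior C \<Longrightarrow> cone_le C y z \<Longrightarrow> Nf C x0 y \<le> Nf C x0 z"
  using N_prop le_trans by meson
lemma N_homog: assumes "x0 \<in> interior C" "y \<in> interior C" "t > 0"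
  shows "Nf C x0 (t *\<^sub>R y) = t * Nf C x0 y"
proof (rule antisym)
  have ty: "t *\<^sub>R y \<in> interior C" using assms int_scale by blast
  show "Nf C x0 (t *\<^sub>R y) \<le> t * Nf C x0 y"
  proof -
    have "cone_le C (t *\<^sub>R y) (t *\<^sub>R (Nf C x0 y *\<^sub>R x0))" using le_scale[OF N_prop(2)[OF assms(1,2)], of t] assms by simp
    then have "cone_le C (t *\<^sub>R y) ((t * Nf C x0 y) *\<^sub>R x0)" by simp
    then show ?thesis using N_prop(3)[OF assms(1) ty, of "t * Nf C x0 y"] N_prop(1)[OF assms(1,2)] assms by simp
  qed
  have "cone_le C ((1/t) *\<^sub>R (t *\<^sub>R y)) ((1/t) *\<^sub>R (Nf C x0 (t *\<^sub>R y) *\<^sub>R x0))"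
    using le_scale[OF N_prop(2)[OF assms(1) ty], of "1/t"] assms by simp
  then have "cone_le C y ((Nf C x0 (t *\<^sub>R y) / t) *\<^sub>R x0)" using assms by simp
  then have "Nf C x0 y \<le> Nf C x0 (t *\<^sub>R y) / t"
    using N_prop(3)[OF assms(1,2), of "Nf C x0 (t *\<^sub>R y) / t"] N_prop(1)[OF assms(1) ty] assms by simp
  then show "t * Nf C x0 y \<le> Nf C x0 (t *\<^sub>R y)" using assms by (simp add: field_simps)
qed
lemma N_lower: "x0 \<in> interior C \<Longrightarrow> y \<in> interior C \<Longrightarrow> cone_le C (b *\<^sub>R x0) y \<Longrightarrow> b \<le> Nf C x0 y"
  using N_prop le_trans le_scalar by meson
lemma N_self: "x0 \<in> interior C \<Longrightarrow> Nf C x0 x0 = 1"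
proof -
  assume x0: "x0 \<in> interior C"
  have "Nf C x0 x0 \<le> 1" using N_prop(3)[OF x0 x0, of 1] le_refl by simp
  moreover have "1 \<le> Nf C x0 x0" using N_lower[OF x0 x0, of 1] le_refl by simp
  ultimately show ?thesis by simp
qed
lemma N_cross: assumes "x0 \<in> interior C" "x1 \<in> interior C" "y \<in> interior C"
  shows "Nf C x1 y \<le> Nf C x1 x0 * Nf C x0 y"
proof -
  have "cone_le C y (Nf C x0 y *\<^sub>R x0)" using N_prop assms by blast
  moreover have "cone_le C (Nf C x0 y *\<^sub>R x0) (Nf C x0 y *\<^sub>R (Nf C x1 x0 *\<^sub>R x1))"
    using le_scale N_prop assms by (meson less_imp_le)
  ultimately have "cone_le C y ((Nf C x1 x0 * Nf C x0 y) *\<^sub>R x1)" using le_trans by (simp add: mult.commute)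
  then show ?thesis using N_prop assms by (meson mult_pos_pos)
qed

end


lemma SUP_cmult:
  fixes f :: "'a \<Rightarrow> real"
  assumes "X \<noteq> {}" "bdd_above (f ` X)" "t > 0"
  shows "(SUP x\<in>X. t * f x) = t * (SUP x\<in>X. f x)"
proof (rule antisym)
  show "(SUP x\<in>X. t * f x) \<le> t * (SUP x\<in>X. f x)"
    using assms by (intro cSUP_least) (auto intro: mult_left_mono cSUP_upper)
  have b: "bdd_above ((\<lambda>x. t * f x) ` X)"
  proof -
    from assms(2) obtain M where "\<forall>x\<in>X. f x \<le> M" by (auto simp: bdd_above_def)
    then show ?thesis using assms(3) by (intro bdd_aboveI2[of _ _ "t*M"]) (simp add: mult_left_mono)
  qed
  have "(SUP x\<in>X. f x) \<le> (SUP x\<in>X. t * f x) / t"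
    using assms by (intro cSUP_least) (auto simp: field_simps intro: cSUP_upper[OF _ b, simplified])
  then show "t * (SUP x\<in>X. f x) \<le> (SUP x\<in>X. t * f x)" using assms by (simp add: field_simps)
qed

lemma INF_cmult:
  fixes f :: "'a \<Rightarrow> real"
  assumes "X \<noteq> {}" "bdd_below (f ` X)" "t > 0"
  shows "(INF x\<in>X. t * f x) = t * (INF x\<in>X. f x)"
proof (rule antisym)
  show "t * (INF x\<in>X. f x) \<le> (INF x\<in>X. t * f x)"
    using assms by (intro cINF_greatest) (auto intro: mult_left_mono cINF_lower)
  have b: "bdd_below ((\<lambda>x. t * f x) ` X)"
  proof -
    from assms(2) obtain M where "\<forall>x\<in>X. M \<le> f x" by (auto simp: bdd_below_def)
    then show ?thesis using assms(3) by (intro bdd_belowI2[of _ "t*M"]) (simp add: mult_left_mono)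
  qed
  have "(INF x\<in>X. t * f x) / t \<le> (INF x\<in>X. f x)"
    using assms by (intro cINF_greatest) (auto simp: field_simps intro: cINF_lower[OF b, simplified])
  then show "(INF x\<in>X. t * f x) \<le> t * (INF x\<in>X. f x)" using assms by (simp add: field_simps)
qed

definition Top :: "'n mat set \<Rightarrow> 'n mat set \<Rightarrow> (real ^ 'n \<Rightarrow> real) \<Rightarrow> real ^ 'n \<Rightarrow> real" where
  "Top \<A> \<B> g y = (INF A\<in>\<A>. SUP B\<in>\<B>. g ((y v* A) v* B))"

definition Tk :: "'n mat set \<Rightarrow> 'n mat set \<Rightarrow> nat \<Rightarrow> (real ^ 'n \<Rightarrow> real) \<Rightarrow> real ^ 'n \<Rightarrow> real" where
  "Tk \<A> \<B> k g = (Top \<A> \<B> ^^ k) g"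

lemma Tk_0[simp]: "Tk \<A> \<B> 0 g = g" by (simp add: Tk_def)
lemma Tk_Suc: "Tk \<A> \<B> (Suc k) g = Top \<A> \<B> (Tk \<A> \<B> k g)" by (simp add: Tk_def)
lemma Tk_add: "Tk \<A> \<B> (j + k) g = Tk \<A> \<B> j (Tk \<A> \<B> k g)" by (simp add: Tk_def funpow_add)

definition ak :: "(real ^ 'n) set \<Rightarrow> 'n mat set \<Rightarrow> 'n mat set \<Rightarrow> real ^ 'n \<Rightarrow> nat \<Rightarrow> real" where
  "ak C \<A> \<B> x0 k = Tk \<A> \<B> k (Nf C x0) x0"

definition rho :: "(real ^ 'n) set \<Rightarrow> 'n mat set \<Rightarrow> 'n mat set \<Rightarrow> real ^ 'n \<Rightarrow> real" where
  "rho C \<A> \<B> x0 = (INF k\<in>{1..}. ln (ak C \<A> \<B> x0 k) / real k)"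

definition good :: "(real ^ 'n) set \<Rightarrow> (real ^ 'n \<Rightarrow> real) \<Rightarrow> bool" where
  "good C g \<longleftrightarrow> (\<forall>y\<in>interior C. 0 < g y) \<and>
     (\<forall>y\<in>interior C. \<forall>z\<in>interior C. cone_le C y z \<longrightarrow> g y \<le> g z) \<and>
     (\<forall>y\<in>interior C. \<forall>t>0. g (t *\<^sub>R y) = t * g y)"

context cset begin

lemma good_pos: "good C g \<Longrightarrow> y \<in> interior C \<Longrightarrow> 0 < g y" by (simp add: good_def)
lemma good_mono: "good C g \<Longrightarrow> y \<in> interior C \<Longrightarrow> z \<in> interior C \<Longrightarrow> cone_le C y z \<Longrightarrow> g y \<le> g z"
  by (simp add: good_def)
lemma good_homog: "good C g \<Longrightarrow> y \<in> interior C \<Longrightarrow> t > 0 \<Longrightarrow> g (t *\<^sub>R y) = t * g y"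
  by (simp add: good_def)
lemma good_N: "x0 \<in> interior C \<Longrightarrow> good C (Nf C x0)"
  unfolding good_def using N_prop(1) N_mono N_homog by blast
lemma good_cmult: "good C g \<Longrightarrow> t > 0 \<Longrightarrow> good C (\<lambda>y. t * g y)"
  unfolding good_def by (auto intro: mult_left_mono)

end

locale gm = cset +
  fixes x0 :: "real ^ 'n" and \<A> \<B> :: "'n mat set" and c K :: real
  assumes x0: "x0 \<in> interior C" and Ane: "\<A> \<noteq> {}" and Bne: "\<B> \<noteq> {}"
    and AE: "\<A> \<subseteq> End_int C" and BE: "\<B> \<subseteq> End_int C"
    and cpos: "c > 0" and Kpos: "K > 0"
    and bnd: "\<And>A B. A \<in> \<A> \<Longrightarrow> B \<in> \<B> \<Longrightarrow>
       cone_le C (c *\<^sub>R x0) ((x0 v* A) v* B) \<and> cone_le C ((x0 v* A) v* B) (K *\<^sub>R x0)"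
begin

lemma AB_int: "y \<in> interior C \<Longrightarrow> A \<in> \<A> \<Longrightarrow> B \<in> \<B> \<Longrightarrow> (y v* A) v* B \<in> interior C"
  using End_int AE BE by blast
lemma AB_mono: "cone_le C y z \<Longrightarrow> A \<in> \<A> \<Longrightarrow> B \<in> \<B> \<Longrightarrow> cone_le C ((y v* A) v* B) ((z v* A) v* B)"
  using End_mono AE BE by blast
lemma AB_scale: "((t *\<^sub>R (y::real^'n)) v* (A::'n mat)) v* (B::'n mat) = t *\<^sub>R ((y v* A) v* B)"
  by (simp add: vm_scale)
lemma AB_upper: "y \<in> interior C \<Longrightarrow> A \<in> \<A> \<Longrightarrow> B \<in> \<B> \<Longrightarrow>
    cone_le C ((y v* A) v* B) ((K * Nf C x0 y) *\<^sub>R x0)"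
proof -
  assume y: "y \<in> interior C" and AB: "A \<in> \<A>" "B \<in> \<B>"
  have "cone_le C ((y v* A) v* B) (((Nf C x0 y *\<^sub>R x0) v* A) v* B)"
    using AB_mono[OF N_prop(2)[OF x0 y] AB] .
  also have "((Nf C x0 y *\<^sub>R x0) v* A) v* B = Nf C x0 y *\<^sub>R ((x0 v* A) v* B)" by (rule AB_scale)
  finally have 1: "cone_le C ((y v* A) v* B) (Nf C x0 y *\<^sub>R ((x0 v* A) v* B))" .
  have "cone_le C (Nf C x0 y *\<^sub>R ((x0 v* A) v* B)) (Nf C x0 y *\<^sub>R (K *\<^sub>R x0))"
    using le_scale bnd[OF AB] N_prop(1)[OF x0 y] by (meson less_imp_le)
  with 1 show ?thesis using le_trans by (simp add: mult.commute)
qed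
lemma AB_lower: "cone_le C (b *\<^sub>R x0) y \<Longrightarrow> b \<ge> 0 \<Longrightarrow> A \<in> \<A> \<Longrightarrow> B \<in> \<B> \<Longrightarrow>
    cone_le C ((b * c) *\<^sub>R x0) ((y v* A) v* B)"
proof -
  assume le: "cone_le C (b *\<^sub>R x0) y" and b: "b \<ge> 0" and AB: "A \<in> \<A>" "B \<in> \<B>"
  have "cone_le C (b *\<^sub>R (c *\<^sub>R x0)) (b *\<^sub>R ((x0 v* A) v* B))" using le_scale bnd[OF AB] b by blast
  moreover have "b *\<^sub>R ((x0 v* A) v* B) = ((b *\<^sub>R x0) v* A) v* B" by (simp add: AB_scale)
  ultimately show ?thesis using AB_mono[OF le AB] le_trans by (metis scaleR_scaleR)
qed

lemma g_bounds:
  assumes g: "good C g" and y: "y \<in> interior C" and AB: "A \<in> \<A>" "B \<in> \<B>"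
  shows "g ((y v* A) v* B) \<le> K * Nf C x0 y * g x0"
proof -
  have "g ((y v* A) v* B) \<le> g ((K * Nf C x0 y) *\<^sub>R x0)"
    using good_mono[OF g AB_int[OF y AB] _ AB_upper[OF y AB]] int_scale[OF x0] Kpos N_prop(1)[OF x0 y] by simp
  also have "\<dots> = K * Nf C x0 y * g x0" using good_homog[OF g x0] Kpos N_prop(1)[OF x0 y] by simp
  finally show ?thesis .
qed
lemma g_lbound:
  assumes g: "good C g" and y: "y \<in> interior C" and AB: "A \<in> \<A>" "B \<in> \<B>"
    and b: "b > 0" "cone_le C (b *\<^sub>R x0) y"
  shows "b * c * g x0 \<le> g ((y v* A) v* B)"
proof -
  have "g ((b * c) *\<^sub>R x0) \<le> g ((y v* A) v* B)"
    using good_mono[OF g _ AB_int[OF y AB] AB_lower[OF b(2) _ AB]] int_scale[OF x0] b cpos by simp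
  moreover have "g ((b * c) *\<^sub>R x0) = b * c * g x0" using good_homog[OF g x0] b cpos by simp
  ultimately show ?thesis by simp
qed

lemma bdd_B: "good C g \<Longrightarrow> y \<in> interior C \<Longrightarrow> A \<in> \<A> \<Longrightarrow> bdd_above ((\<lambda>B. g ((y v* A) v* B)) ` \<B>)"
  using g_bounds by (intro bdd_aboveI2) blast

lemma SUP_lower:
  assumes g: "good C g" and y: "y \<in> interior C" and A: "A \<in> \<A>"
    and b: "b > 0" "cone_le C (b *\<^sub>R x0) y"
  shows "b * c * g x0 \<le> (SUP B\<in>\<B>. g ((y v* A) v* B))"
proof -
  obtain B where B: "B \<in> \<B>" using Bne by blast
  show ?thesis using g_lbound[OF g y A B b] cSUP_upper[OF B bdd_B[OF g y A]] by linarith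
qed

lemma bdd_A: "good C g \<Longrightarrow> y \<in> interior C \<Longrightarrow> bdd_below ((\<lambda>A. SUP B\<in>\<B>. g ((y v* A) v* B)) ` \<A>)"
proof -
  assume g: "good C g" and y: "y \<in> interior C"
  obtain b where b: "b > 0" "cone_le C (b *\<^sub>R x0) y" using int_lower[OF y] by blast
  show ?thesis using SUP_lower[OF g y _ b] by (intro bdd_belowI2) blast
qed

lemma Top_lower:
  assumes g: "good C g" and y: "y \<in> interior C" and b: "b > 0" "cone_le C (b *\<^sub>R x0) y"
  shows "b * c * g x0 \<le> Top \<A> \<B> g y"
  unfolding Top_def using SUP_lower[OF g y _ b] Ane by (intro cINF_greatest) auto

lemma Top_good: assumes g: "good C g" shows "good C (Top \<A> \<B> g)"
  unfolding good_def
proof (intro conjI ballI allI impI)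
  fix y assume y: "y \<in> interior C"
  obtain b where b: "b > 0" "cone_le C (b *\<^sub>R x0) y" using int_lower[OF y] by blast
  have "0 < b * c * g x0" using b cpos good_pos[OF g x0] by simp
  then show "0 < Top \<A> \<B> g y" using Top_lower[OF g y b] by linarith
next
  fix y z assume y: "y \<in> interior C" and z: "z \<in> interior C" and le: "cone_le C y z"
  show "Top \<A> \<B> g y \<le> Top \<A> \<B> g z" unfolding Top_def
  proof (rule cINF_mono[OF Ane bdd_A[OF g y]])
    fix A assume A: "A \<in> \<A>"
    have "(SUP B\<in>\<B>. g ((y v* A) v* B)) \<le> (SUP B\<in>\<B>. g ((z v* A) v* B))"
      using Bne bdd_B[OF g z A] good_mono[OF g AB_int[OF y A] AB_int[OF z A] AB_mono[OF le A]]
      by (intro cSUP_mono) auto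
    then show "\<exists>n\<in>\<A>. (SUP B\<in>\<B>. g ((y v* n) v* B)) \<le> (SUP B\<in>\<B>. g ((z v* A) v* B))" using A by blast
  qed
next
  fix y and t :: real assume y: "y \<in> interior C" and t: "t > 0"
  have "\<And>A. A \<in> \<A> \<Longrightarrow> (SUP B\<in>\<B>. g (((t *\<^sub>R y) v* A) v* B)) = t * (SUP B\<in>\<B>. g ((y v* A) v* B))"
  proof -
    fix A assume A: "A \<in> \<A>"
    have "(SUP B\<in>\<B>. g (((t *\<^sub>R y) v* A) v* B)) = (SUP B\<in>\<B>. t * g ((y v* A) v* B))"
      using good_homog[OF g AB_int[OF y A] t] by (intro SUP_cong) (auto simp: AB_scale)
    also have "\<dots> = t * (SUP B\<in>\<B>. g ((y v* A) v* B))" using SUP_cmult[OF Bne bdd_B[OF g y A] t] .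
    finally show "?thesis A" .
  qed
  then have "Top \<A> \<B> g (t *\<^sub>R y) = (INF A\<in>\<A>. t * (SUP B\<in>\<B>. g ((y v* A) v* B)))"
    unfolding Top_def by (intro INF_cong) auto
  also have "\<dots> = t * Top \<A> \<B> g y" unfolding Top_def using INF_cmult[OF Ane bdd_A[OF g y] t] .
  finally show "Top \<A> \<B> g (t *\<^sub>R y) = t * Top \<A> \<B> g y" .
qed

lemma Top_mono:
  assumes g: "good C g" and g': "good C g'" and le: "\<And>y. y \<in> interior C \<Longrightarrow> g y \<le> g' y"
    and y: "y \<in> interior C"
  shows "Top \<A> \<B> g y \<le> Top \<A> \<B> g' y"
  unfolding Top_def
proof (rule cINF_mono[OF Ane bdd_A[OF g y]])
  fix A assume A: "A \<in> \<A>"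
  have "(SUP B\<in>\<B>. g ((y v* A) v* B)) \<le> (SUP B\<in>\<B>. g' ((y v* A) v* B))"
    using Bne bdd_B[OF g' y A] le AB_int[OF y A] by (intro cSUP_mono) auto
  then show "\<exists>n\<in>\<A>. (SUP B\<in>\<B>. g ((y v* n) v* B)) \<le> (SUP B\<in>\<B>. g' ((y v* A) v* B))" using A by blast
qed

lemma Top_cmult:
  assumes g: "good C g" and t: "t > 0" and y: "y \<in> interior C"
  shows "Top \<A> \<B> (\<lambda>z. t * g z) y = t * Top \<A> \<B> g y"
proof -
  have "Top \<A> \<B> (\<lambda>z. t * g z) y = (INF A\<in>\<A>. t * (SUP B\<in>\<B>. g ((y v* A) v* B)))"
    unfolding Top_def using SUP_cmult[OF Bne bdd_B[OF g y] t] by (intro INF_cong) auto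
  also have "\<dots> = t * Top \<A> \<B> g y" unfolding Top_def using INF_cmult[OF Ane bdd_A[OF g y] t] .
  finally show ?thesis .
qed

lemma Tk_good: "good C g \<Longrightarrow> good C (Tk \<A> \<B> k g)"
  by (induction k) (auto simp: Tk_Suc Top_good)

lemma Tk_le:
  assumes g: "good C g" and g': "good C g'" and t: "t > 0"
    and le: "\<And>y. y \<in> interior C \<Longrightarrow> g y \<le> t * g' y"
  shows "y \<in> interior C \<Longrightarrow> Tk \<A> \<B> k g y \<le> t * Tk \<A> \<B> k g' y"
proof (induction k arbitrary: y)
  case 0 then show ?case using le by simp
next
  case (Suc k)
  have "Tk \<A> \<B> (Suc k) g y \<le> Top \<A> \<B> (\<lambda>z. t * Tk \<A> \<B> k g' z) y"
    unfolding Tk_Suc using Top_mono[OF Tk_good[OF g] good_cmult[OF Tk_good[OF g'] t] Suc.IH Suc.prems] .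
  also have "\<dots> = t * Tk \<A> \<B> (Suc k) g' y" unfolding Tk_Suc using Top_cmult[OF Tk_good[OF g'] t Suc.prems] .
  finally show ?case .
qed

abbreviation "a \<equiv> ak C \<A> \<B> x0"
abbreviation "N \<equiv> Nf C x0"

lemma a_pos: "a k > 0"
  unfolding ak_def using good_pos[OF Tk_good[OF good_N[OF x0]] x0] .

lemma Tk_N_le: "y \<in> interior C \<Longrightarrow> Tk \<A> \<B> k N y \<le> N y * a k"
proof -
  assume y: "y \<in> interior C"
  have "Tk \<A> \<B> k N y \<le> Tk \<A> \<B> k N (N y *\<^sub>R x0)"
    using good_mono[OF Tk_good[OF good_N[OF x0]] y int_scale[OF x0 N_prop(1)[OF x0 y]] N_prop(2)[OF x0 y]] .
  also have "\<dots> = N y * a k" unfolding ak_def using good_homog[OF Tk_good[OF good_N[OF x0]] x0 N_prop(1)[OF x0 y]] .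
  finally show ?thesis .
qed
lemma Tk_N_ge: "y \<in> interior C \<Longrightarrow> b > 0 \<Longrightarrow> cone_le C (b *\<^sub>R x0) y \<Longrightarrow> b * a k \<le> Tk \<A> \<B> k N y"
proof -
  assume y: "y \<in> interior C" and b: "b > 0" "cone_le C (b *\<^sub>R x0) y"
  have "Tk \<A> \<B> k N (b *\<^sub>R x0) \<le> Tk \<A> \<B> k N y"
    using good_mono[OF Tk_good[OF good_N[OF x0]] int_scale[OF x0 b(1)] y b(2)] .
  moreover have "Tk \<A> \<B> k N (b *\<^sub>R x0) = b * a k" unfolding ak_def using good_homog[OF Tk_good[OF good_N[OF x0]] x0 b(1)] .
  ultimately show ?thesis by simp
qed

lemma a_0: "a 0 = 1" by (simp add: ak_def N_self[OF x0])
lemma a_step: "c * a k \<le> a (Suc k)"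
proof -
  have "cone_le C (1 *\<^sub>R x0) x0" using le_refl by simp
  from Top_lower[OF Tk_good[OF good_N[OF x0]] x0 zero_less_one this, of k]
  show ?thesis unfolding ak_def Tk_Suc by simp
qed
lemma a_lower: "c ^ k \<le> a k"
proof (induction k)
  case 0 then show ?case by (simp add: a_0)
next
  case (Suc k) then show ?case using a_step[of k] cpos by (simp add: order_trans[OF mult_left_mono])
qed
lemma a_submult: "a (j + k) \<le> a j * a k"
proof -
  have "Tk \<A> \<B> j (Tk \<A> \<B> k N) x0 \<le> a k * Tk \<A> \<B> j N x0"
  proof -
    have "\<And>y. y \<in> interior C \<Longrightarrow> Tk \<A> \<B> k N y \<le> a k * N y" using Tk_N_le by (simp add: mult.commute)
    from Tk_le[OF Tk_good[OF good_N[OF x0]] good_N[OF x0] a_pos this x0] show ?thesis .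
  qed
  then show ?thesis by (simp add: ak_def Tk_add mult.commute)
qed
lemma a_pow: "a (j * k) \<le> a k ^ j"
proof (induction j)
  case 0 then show ?case by (simp add: a_0)
next
  case (Suc j)
  have "a (Suc j * k) = a (k + j * k)" by simp
  also have "\<dots> \<le> a k * a (j * k)" by (rule a_submult)
  also have "\<dots> \<le> a k * a k ^ j" using Suc a_pos by (simp add: mult_left_mono less_imp_le)
  finally show ?case by simp
qed

lemma rho_bdd: "bdd_below ((\<lambda>k. ln (a k) / real k) ` {1..})"
proof (rule bdd_belowI2[of _ "ln c"])
  fix k :: nat assume "k \<in> {1..}"
  then have k: "k \<ge> 1" by simp
  have "ln (c ^ k) \<le> ln (a k)" using a_lower[of k] cpos a_pos by simp
  then have "real k * ln c \<le> ln (a k)" using cpos by (simp add: ln_realpow)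
  then show "ln c \<le> ln (a k) / real k" using k by (simp add: field_simps)
qed
lemma rho_le: "k \<ge> 1 \<Longrightarrow> rho C \<A> \<B> x0 \<le> ln (a k) / real k"
  unfolding rho_def using rho_bdd by (intro cINF_lower) auto
lemma rho_exp: "k \<ge> 1 \<Longrightarrow> exp (rho C \<A> \<B> x0 * real k) \<le> a k"
proof -
  assume k: "k \<ge> 1"
  have "rho C \<A> \<B> x0 * real k \<le> ln (a k)" using rho_le[OF k] k by (simp add: field_simps)
  then show ?thesis using a_pos by (metis exp_le_cancel_iff exp_ln)
qed
lemma rho_lt: "r > rho C \<A> \<B> x0 \<Longrightarrow> \<exists>k\<ge>1. ln (a k) / real k < r"
  unfolding rho_def using cINF_less_iff[OF _ rho_bdd] by auto

end


definition stH :: "real ^ 'n \<Rightarrow> ('n mat \<times> 'n mat) list \<Rightarrow> real ^ 'n" where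
  "stH x0 h = foldl (\<lambda>x p. (x v* fst p) v* snd p) x0 h"

lemma length_hist[simp]: "length (hist \<sigma> \<tau> k) = k" by (induction k) auto
lemma state_stH: "state x0 \<sigma> \<tau> k = stH x0 (hist \<sigma> \<tau> k)"
  by (induction k) (simp_all add: stH_def)

context gm begin

definition minch :: "real \<Rightarrow> nat \<Rightarrow> real ^ 'n \<Rightarrow> 'n mat" where
  "minch e r y = (if \<exists>A\<in>\<A>. (SUP B\<in>\<B>. Tk \<A> \<B> (r-1) N ((y v* A) v* B)) \<le> (1+e) * Tk \<A> \<B> r N y
     then SOME A. A\<in>\<A> \<and> (SUP B\<in>\<B>. Tk \<A> \<B> (r-1) N ((y v* A) v* B)) \<le> (1+e) * Tk \<A> \<B> r N y
     else SOME A. A\<in>\<A>)"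

lemma minch_in: "minch e r y \<in> \<A>"
proof (cases "\<exists>A\<in>\<A>. (SUP B\<in>\<B>. Tk \<A> \<B> (r-1) N ((y v* A) v* B)) \<le> (1+e) * Tk \<A> \<B> r N y")
  case True
  then have "\<exists>A. A\<in>\<A> \<and> (SUP B\<in>\<B>. Tk \<A> \<B> (r-1) N ((y v* A) v* B)) \<le> (1+e) * Tk \<A> \<B> r N y" by blast
  from someI_ex[OF this] True show ?thesis unfolding minch_def by simp
next
  case False
  have "\<exists>A. A \<in> \<A>" using Ane by blast
  from someI_ex[OF this] False show ?thesis unfolding minch_def by simp
qed

lemma minch_prop:
  assumes y: "y \<in> interior C" and r: "1 \<le> r" and e: "0 < e"
  shows "(SUP B\<in>\<B>. Tk \<A> \<B> (r-1) N ((y v* minch e r y) v* B)) \<le> (1+e) * Tk \<A> \<B> r N y"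
proof -
  have g: "good C (Tk \<A> \<B> (r-1) N)" using Tk_good good_N x0 by blast
  have r': "r = Suc (r - 1)" using r by simp
  have eq: "Tk \<A> \<B> r N y = (INF A\<in>\<A>. SUP B\<in>\<B>. Tk \<A> \<B> (r-1) N ((y v* A) v* B))"
    by (subst r') (simp add: Tk_Suc Top_def)
  have p: "0 < Tk \<A> \<B> r N y" using good_pos[OF Tk_good[OF good_N[OF x0]] y] .
  then have "Tk \<A> \<B> r N y < (1+e) * Tk \<A> \<B> r N y" using e by simp
  then have "\<exists>A\<in>\<A>. (SUP B\<in>\<B>. Tk \<A> \<B> (r-1) N ((y v* A) v* B)) < (1+e) * Tk \<A> \<B> r N y"
    using cINF_less_iff[OF Ane bdd_A[OF g y]] eq by simp
  then have ex: "\<exists>A. A\<in>\<A> \<and> (SUP B\<in>\<B>. Tk \<A> \<B> (r-1) N ((y v* A) v* B)) \<le> (1+e) * Tk \<A> \<B> r N y"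
    by (auto intro: less_imp_le)
  from someI_ex[OF ex] ex show ?thesis unfolding minch_def by auto
qed

definition sigm :: "real \<Rightarrow> nat \<Rightarrow> 'n min_strat" where
  "sigm e k h = minch e (k - length h mod k) (stH x0 h)"

lemma sigm_strat: "is_min_strat \<A> (sigm e k)"
  unfolding is_min_strat_def sigm_def using minch_in by blast

context
  fixes e :: real and k :: nat and \<tau> :: "'n max_strat"
  assumes e: "e > 0" and k: "k \<ge> 1" and \<tau>: "is_max_strat \<B> \<tau>"
begin

lemma zm_Suc: "state x0 (sigm e k) \<tau> (Suc t) =
   (state x0 (sigm e k) \<tau> t v* minch e (k - t mod k) (state x0 (sigm e k) \<tau> t)) v*
     \<tau> (hist (sigm e k) \<tau> t) (minch e (k - t mod k) (state x0 (sigm e k) \<tau> t))"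
  by (simp add: sigm_def state_stH[symmetric])

lemma zm_int: "state x0 (sigm e k) \<tau> t \<in> interior C"
proof (induction t)
  case 0 then show ?case using x0 by simp
next
  case (Suc t)
  show ?case unfolding zm_Suc using AB_int[OF Suc minch_in] \<tau> by (simp add: is_max_strat_def)
qed

lemma zm_block: "j \<le> k \<Longrightarrow> Tk \<A> \<B> (k - j) N (state x0 (sigm e k) \<tau> (q*k+j))
   \<le> (1+e)^j * a k * N (state x0 (sigm e k) \<tau> (q*k))"
proof (induction j)
  case 0
  show ?case using Tk_N_le[OF zm_int] by (simp add: mult.commute)
next
  case (Suc j)
  let ?z = "state x0 (sigm e k) \<tau>"
  let ?t = "q*k+j"
  have jk: "j < k" using Suc by simp
  have tm: "?t mod k = j" using jk by simp
  define r where "r = k - j"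
  have r1: "1 \<le> r" using jk by (simp add: r_def)
  define A where "A = minch e r (?z ?t)"
  define B where "B = \<tau> (hist (sigm e k) \<tau> ?t) A"
  have A: "A \<in> \<A>" unfolding A_def by (rule minch_in)
  have B: "B \<in> \<B>" using \<tau> unfolding B_def is_max_strat_def by blast
  have zs: "?z (q*k + Suc j) = (?z ?t v* A) v* B"
    using zm_Suc[of ?t] unfolding A_def B_def r_def tm by simp
  have g: "good C (Tk \<A> \<B> (r-1) N)" using Tk_good good_N x0 by blast
  have "Tk \<A> \<B> (k - Suc j) N (?z (q*k + Suc j)) = Tk \<A> \<B> (r-1) N ((?z ?t v* A) v* B)"
    using zs by (simp add: r_def)
  also have "\<dots> \<le> (SUP B\<in>\<B>. Tk \<A> \<B> (r-1) N ((?z ?t v* A) v* B))"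
    using cSUP_upper[OF B bdd_B[OF g zm_int A]] .
  also have "\<dots> \<le> (1+e) * Tk \<A> \<B> r N (?z ?t)"
    unfolding A_def using minch_prop[OF zm_int r1 e] .
  also have "\<dots> \<le> (1+e) * ((1+e)^j * a k * N (?z (q*k)))"
    using Suc jk e unfolding r_def by (intro mult_left_mono) auto
  finally show ?case by (simp add: mult.assoc)
qed

lemma zm_q: "N (state x0 (sigm e k) \<tau> (q*k)) \<le> ((1+e)^k * a k)^q"
proof (induction q)
  case 0 then show ?case using N_self[OF x0] by simp
next
  case (Suc q)
  have "N (state x0 (sigm e k) \<tau> (Suc q * k)) \<le> (1+e)^k * a k * N (state x0 (sigm e k) \<tau> (q*k))"
    using zm_block[of k q] by (simp add: add.commute)
  also have "\<dots> \<le> (1+e)^k * a k * ((1+e)^k * a k)^q"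
  proof -
    have "0 \<le> (1+e)^k * a k" using a_pos[of k] e by simp
    then show ?thesis using Suc by (intro mult_left_mono) auto
  qed
  finally show ?case by simp
qed

lemma zm_step: "N (state x0 (sigm e k) \<tau> (Suc t)) \<le> K * N (state x0 (sigm e k) \<tau> t)"
proof -
  let ?z = "state x0 (sigm e k) \<tau>"
  have A: "minch e (k - t mod k) (?z t) \<in> \<A>" by (rule minch_in)
  have B: "\<tau> (hist (sigm e k) \<tau> t) (minch e (k - t mod k) (?z t)) \<in> \<B>" using \<tau> by (simp add: is_max_strat_def)
  show ?thesis unfolding zm_Suc[of t]
    using N_prop(3)[OF x0 AB_int[OF zm_int A B] _ AB_upper[OF zm_int A B]] Kpos N_prop(1)[OF x0 zm_int] by simp
qed

lemma zm_inter: "N (state x0 (sigm e k) \<tau> (t + j)) \<le> max 1 K ^ j * N (state x0 (sigm e k) \<tau> t)"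
proof (induction j)
  case 0 then show ?case by simp
next
  case (Suc j)
  have "N (state x0 (sigm e k) \<tau> (t + Suc j)) \<le> K * N (state x0 (sigm e k) \<tau> (t + j))"
    using zm_step[of "t+j"] by simp
  also have "\<dots> \<le> max 1 K * N (state x0 (sigm e k) \<tau> (t + j))"
    using less_imp_le[OF N_prop(1)[OF x0 zm_int]] by (intro mult_right_mono) auto
  also have "\<dots> \<le> max 1 K * (max 1 K ^ j * N (state x0 (sigm e k) \<tau> t))"
    using Suc by (intro mult_left_mono) auto
  finally show ?case by (simp add: mult.assoc)
qed

lemma zm_all: "N (state x0 (sigm e k) \<tau> t) \<le> max 1 K ^ k * ((1+e)^k * a k)^(t div k)"
proof -
  have t: "t = (t div k) * k + t mod k" by simp
  have "N (state x0 (sigm e k) \<tau> t) \<le> max 1 K ^ (t mod k) * N (state x0 (sigm e k) \<tau> ((t div k) * k))"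
    using zm_inter[of "(t div k) * k" "t mod k"] t by simp
  also have "\<dots> \<le> max 1 K ^ k * ((1+e)^k * a k)^(t div k)"
  proof (rule mult_mono)
    show "max 1 K ^ (t mod k) \<le> max 1 K ^ k" using k by (intro power_increasing) (auto intro: less_imp_le)
  qed (use zm_q less_imp_le[OF N_prop(1)[OF x0 zm_int]] in auto)
  finally show ?thesis .
qed

lemma zm_ln:
  assumes t: "t \<ge> 1"
  shows "ln (N (state x0 (sigm e k) \<tau> t)) / real t \<le> ln ((1+e)^k * a k) / real k
     + (real k * ln (max 1 K) + \<bar>ln ((1+e)^k * a k)\<bar>) / real t"
proof -
  define L where "L = ln ((1+e)^k * a k)"
  define q where "q = t div k"
  have P: "0 < (1+e)^k * a k" using e a_pos by simp
  have "ln (N (state x0 (sigm e k) \<tau> t)) \<le> ln (max 1 K ^ k * ((1+e)^k * a k)^q)"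
  proof -
    have n: "0 < N (state x0 (sigm e k) \<tau> t)" using N_prop(1)[OF x0 zm_int] .
    have le: "N (state x0 (sigm e k) \<tau> t) \<le> max 1 K ^ k * ((1+e)^k * a k)^q" using zm_all unfolding q_def .
    then have "0 < max 1 K ^ k * ((1+e)^k * a k)^q" using n by linarith
    then show ?thesis using n le by simp
  qed
  also have "\<dots> = real k * ln (max 1 K) + real q * L"
  proof -
    have m1: "0 < max 1 K ^ k" by simp
    have m2: "0 < ((1+e)^k * a k)^q" using P by simp
    have m3: "0 < max 1 (K::real)" by simp
    show ?thesis unfolding ln_mult_pos[OF m1 m2] ln_realpow L_def by simp
  qed
  finally have 1: "ln (N (state x0 (sigm e k) \<tau> t)) \<le> real k * ln (max 1 K) + real q * L" .
  have dm: "t div k * k + t mod k = t" by simp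
  have mk: "t mod k < k" using k by simp
  have n1: "t div k * k \<le> t" using dm by linarith
  have n2: "t < t div k * k + k" using dm mk by linarith
  have qk1: "real q * real k \<le> real t" unfolding q_def using n1
    by (metis of_nat_le_iff of_nat_mult)
  have qk2: "real t < (real q + 1) * real k"
  proof -
    have "real t < real (t div k * k + k)" using n2 by (simp only: of_nat_less_iff)
    then show ?thesis unfolding q_def by (simp add: algebra_simps)
  qed
  have kpos: "real k > 0" using k by simp
  have "real q * L \<le> real t * L / real k + \<bar>L\<bar>"
  proof (cases "L \<ge> 0")
    case True
    have "real q \<le> real t / real k" using qk1 kpos by (simp add: field_simps)
    then have "real q * L \<le> real t / real k * L" using True by (intro mult_right_mono) auto
    then show ?thesis using True by simp
  next
    case False
    have "real t / real k - 1 \<le> real q" using qk2 kpos by (simp add: field_simps)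
    then have "real q * L \<le> (real t / real k - 1) * L" using False by (intro mult_right_mono_neg) auto
    then show ?thesis using False by (simp add: algebra_simps)
  qed
  with 1 have "ln (N (state x0 (sigm e k) \<tau> t)) \<le> real t * (L / real k) + (real k * ln (max 1 K) + \<bar>L\<bar>)"
    by simp
  then show ?thesis using t unfolding L_def[symmetric] by (simp add: field_simps)
qed

lemma zm_payoff:
  assumes d: "\<delta> > 0"
  shows "payoff C x0 (sigm e k) \<tau> \<le> ereal (ln ((1+e)^k * a k) / real k + \<delta>)"
proof -
  define D where "D = real k * ln (max 1 K) + \<bar>ln ((1+e)^k * a k)\<bar>"
  define T0 where "T0 = nat \<lceil>D / \<delta>\<rceil> + 1"
  have "\<forall>t\<ge>T0. ereal (funk C (state x0 (sigm e k) \<tau> t) x0 / real t) \<le> ereal (ln ((1+e)^k * a k) / real k + \<delta>)"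
  proof (intro allI impI)
    fix t assume t: "t \<ge> T0"
    then have t1: "t \<ge> 1" unfolding T0_def by simp
    have "D / \<delta> < real t" using t unfolding T0_def by linarith
    then have "D / real t \<le> \<delta>" using d t1 by (simp add: field_simps)
    then show "ereal (funk C (state x0 (sigm e k) \<tau> t) x0 / real t) \<le> ereal (ln ((1+e)^k * a k) / real k + \<delta>)"
      using zm_ln[OF t1] unfolding funk_Nf D_def by simp
  qed
  then show ?thesis unfolding payoff_def by (intro Limsup_bounded) (auto simp: eventually_sequentially)
qed

end

lemma min_guarantee:
  assumes eps: "\<epsilon> > 0"
  shows "\<exists>\<sigma>. is_min_strat \<A> \<sigma> \<and> (\<forall>\<tau>. is_max_strat \<B> \<tau> \<longrightarrow> payoff C x0 \<sigma> \<tau> \<le> ereal (rho C \<A> \<B> x0 + \<epsilon>))"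
proof -
  obtain k where k: "k \<ge> 1" "ln (a k) / real k < rho C \<A> \<B> x0 + \<epsilon>/2" using rho_lt[of "rho C \<A> \<B> x0 + \<epsilon>/2"] eps by auto
  define e where "e = \<epsilon>/4"
  have e: "e > 0" using eps by (simp add: e_def)
  have "ln ((1+e)^k * a k) / real k = ln (1+e) + ln (a k) / real k"
  proof -
    have "ln ((1+e)^k * a k) = real k * ln (1+e) + ln (a k)"
      using ln_mult_pos[of "(1+e)^k" "a k"] e a_pos[of k] by (simp add: ln_realpow)
    moreover have "real k > 0" using k by simp
    ultimately show ?thesis by (simp add: add_divide_distrib)
  qed
  also have "\<dots> \<le> e + ln (a k) / real k" using ln_add_one_self_le_self e by simp
  finally have b: "ln ((1+e)^k * a k) / real k + \<epsilon>/4 \<le> rho C \<A> \<B> x0 + \<epsilon>" using k(2) unfolding e_def by simp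
  show ?thesis
  proof (intro exI conjI allI impI)
    show "is_min_strat \<A> (sigm e k)" by (rule sigm_strat)
    fix \<tau> assume \<tau>: "is_max_strat \<B> \<tau>"
    have "payoff C x0 (sigm e k) \<tau> \<le> ereal (ln ((1+e)^k * a k) / real k + \<epsilon>/4)"
      using zm_payoff[OF e k(1) \<tau>, of "\<epsilon>/4"] eps by simp
    also have "\<dots> \<le> ereal (rho C \<A> \<B> x0 + \<epsilon>)" using b by simp
    finally show "payoff C x0 (sigm e k) \<tau> \<le> ereal (rho C \<A> \<B> x0 + \<epsilon>)" .
  qed
qed

end


definition nxt :: "nat \<Rightarrow> nat" where "nxt t = fact (LEAST i. t < (fact i :: nat))"

lemma nxt_phase:
  assumes "fact m \<le> t" "t < (fact (Suc m) :: nat)"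
  shows "nxt t = fact (Suc m)"
proof -
  have "(LEAST i. t < (fact i :: nat)) = Suc m"
  proof (rule Least_equality)
    show "t < fact (Suc m)" using assms(2) .
    fix y assume y: "t < (fact y :: nat)"
    show "Suc m \<le> y"
    proof (rule ccontr)
      assume "\<not> Suc m \<le> y"
      then have "y \<le> m" by simp
      then have "(fact y :: nat) \<le> fact m" by (rule fact_mono_nat)
      with y assms(1) show False by simp
    qed
  qed
  then show ?thesis unfolding nxt_def by simp
qed

context gm begin

definition maxch :: "real \<Rightarrow> nat \<Rightarrow> real ^ 'n \<Rightarrow> 'n mat \<Rightarrow> 'n mat" where
  "maxch e r y A = (if \<exists>B\<in>\<B>. (SUP B'\<in>\<B>. Tk \<A> \<B> (r-1) N ((y v* A) v* B')) \<le> (1+e) * Tk \<A> \<B> (r-1) N ((y v* A) v* B)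
     then SOME B. B\<in>\<B> \<and> (SUP B'\<in>\<B>. Tk \<A> \<B> (r-1) N ((y v* A) v* B')) \<le> (1+e) * Tk \<A> \<B> (r-1) N ((y v* A) v* B)
     else SOME B. B\<in>\<B>)"

lemma maxch_in: "maxch e r y A \<in> \<B>"
proof (cases "\<exists>B\<in>\<B>. (SUP B'\<in>\<B>. Tk \<A> \<B> (r-1) N ((y v* A) v* B')) \<le> (1+e) * Tk \<A> \<B> (r-1) N ((y v* A) v* B)")
  case True
  then have "\<exists>B. B\<in>\<B> \<and> (SUP B'\<in>\<B>. Tk \<A> \<B> (r-1) N ((y v* A) v* B')) \<le> (1+e) * Tk \<A> \<B> (r-1) N ((y v* A) v* B)" by blast
  from someI_ex[OF this] True show ?thesis unfolding maxch_def by simp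
next
  case False
  have "\<exists>B. B \<in> \<B>" using Bne by blast
  from someI_ex[OF this] False show ?thesis unfolding maxch_def by simp
qed

lemma maxch_prop:
  assumes y: "y \<in> interior C" and A: "A \<in> \<A>" and r: "1 \<le> r" and e: "0 < e"
  shows "Tk \<A> \<B> r N y \<le> (1+e) * Tk \<A> \<B> (r-1) N ((y v* A) v* maxch e r y A)"
proof -
  have g: "good C (Tk \<A> \<B> (r-1) N)" using Tk_good good_N x0 by blast
  define s where "s = (SUP B'\<in>\<B>. Tk \<A> \<B> (r-1) N ((y v* A) v* B'))"
  obtain B0 where B0: "B0 \<in> \<B>" using Bne by blast
  have "0 < Tk \<A> \<B> (r-1) N ((y v* A) v* B0)" using good_pos[OF g AB_int[OF y A B0]] .
  moreover have "Tk \<A> \<B> (r-1) N ((y v* A) v* B0) \<le> s" unfolding s_def using cSUP_upper[OF B0 bdd_B[OF g y A]] .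
  ultimately have sp: "0 < s" by linarith
  then have "s / (1+e) < s" using e by (simp add: field_simps)
  then have "\<exists>B\<in>\<B>. s / (1+e) < Tk \<A> \<B> (r-1) N ((y v* A) v* B)"
    using less_cSUP_iff[OF Bne bdd_B[OF g y A]] unfolding s_def by simp
  then have ex: "\<exists>B. B\<in>\<B> \<and> s \<le> (1+e) * Tk \<A> \<B> (r-1) N ((y v* A) v* B)"
    using e by (auto simp: field_simps intro: less_imp_le)
  from someI_ex[OF ex[unfolded s_def]] ex[unfolded s_def]
  have Q: "s \<le> (1+e) * Tk \<A> \<B> (r-1) N ((y v* A) v* maxch e r y A)" unfolding maxch_def s_def by auto
  have r': "r = Suc (r - 1)" using r by simp
  have "Tk \<A> \<B> r N y = (INF A\<in>\<A>. SUP B\<in>\<B>. Tk \<A> \<B> (r-1) N ((y v* A) v* B))"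
    by (subst r') (simp add: Tk_Suc Top_def)
  also have "\<dots> \<le> s" unfolding s_def using cINF_lower[OF bdd_A[OF g y] A] .
  finally show ?thesis using Q by linarith
qed

definition taum :: "real \<Rightarrow> 'n max_strat" where
  "taum e h A = maxch e (nxt (length h) - length h) (stH x0 h) A"

lemma taum_strat: "is_max_strat \<B> (taum e)"
  unfolding is_max_strat_def taum_def using maxch_in by blast

context
  fixes e :: real and \<sigma> :: "'n min_strat"
  assumes e: "e > 0" and \<sigma>: "is_min_strat \<A> \<sigma>"
begin

lemma zM_Suc: "state x0 \<sigma> (taum e) (Suc t) =
   (state x0 \<sigma> (taum e) t v* \<sigma> (hist \<sigma> (taum e) t)) v*
     maxch e (nxt t - t) (state x0 \<sigma> (taum e) t) (\<sigma> (hist \<sigma> (taum e) t))"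
  by (simp add: taum_def state_stH[symmetric])

lemma sig_in: "\<sigma> h \<in> \<A>" using \<sigma> by (simp add: is_min_strat_def)

lemma zM_int: "state x0 \<sigma> (taum e) t \<in> interior C"
proof (induction t)
  case 0 then show ?case using x0 by simp
next
  case (Suc t)
  show ?case unfolding zM_Suc using AB_int[OF Suc sig_in maxch_in] .
qed

lemma zM_lower: "cone_le C ((c ^ t) *\<^sub>R x0) (state x0 \<sigma> (taum e) t)"
proof (induction t)
  case 0 then show ?case using le_refl by simp
next
  case (Suc t)
  have "cone_le C ((c ^ t * c) *\<^sub>R x0) (state x0 \<sigma> (taum e) (Suc t))"
    unfolding zM_Suc using AB_lower[OF Suc _ sig_in maxch_in] cpos by simp
  then show ?case by (simp add: mult.commute)
qed

lemma zM_phase: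
  assumes j: "j \<le> fact (Suc m) - fact m"
  shows "Tk \<A> \<B> (fact (Suc m) - fact m) N (state x0 \<sigma> (taum e) (fact m))
     \<le> (1+e)^j * Tk \<A> \<B> (fact (Suc m) - fact m - j) N (state x0 \<sigma> (taum e) (fact m + j))"
  using j
proof (induction j)
  case 0 then show ?case by simp
next
  case (Suc j)
  let ?z = "state x0 \<sigma> (taum e)"
  let ?L = "fact (Suc m) - fact m :: nat"
  let ?t = "fact m + j :: nat"
  have jL: "j < ?L" using Suc.prems by simp
  have t1: "fact m \<le> ?t" by simp
  have t2: "?t < fact (Suc m)" using jL by simp
  have nx: "nxt ?t - ?t = ?L - j" using nxt_phase[OF t1 t2] by simp
  have r1: "1 \<le> ?L - j" using jL by simp
  have "Tk \<A> \<B> ?L N (?z (fact m)) \<le> (1+e)^j * Tk \<A> \<B> (?L - j) N (?z ?t)"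
    using Suc jL by simp
  also have "Tk \<A> \<B> (?L - j) N (?z ?t) \<le> (1+e) * Tk \<A> \<B> (?L - j - 1) N (?z (Suc ?t))"
    unfolding zM_Suc[of ?t] nx using maxch_prop[OF zM_int sig_in r1 e] by simp
  finally have "Tk \<A> \<B> ?L N (?z (fact m)) \<le> (1+e)^j * ((1+e) * Tk \<A> \<B> (?L - j - 1) N (?z (Suc ?t)))"
    using e by (simp add: mult_left_mono)
  then show ?case by (simp add: mult.assoc mult.commute mult.left_commute)
qed

lemma zM_end:
  assumes m: "1 \<le> m"
  shows "c ^ (fact m) * exp (rho C \<A> \<B> x0 * real (fact (Suc m) - fact m))
    \<le> (1+e)^(fact (Suc m) - fact m) * N (state x0 \<sigma> (taum e) (fact (Suc m)))"
proof -
  let ?L = "fact (Suc m) - fact m :: nat"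
  have le: "fact m \<le> (fact (Suc m) :: nat)" by (rule fact_mono_nat) simp
  have fm: "(fact m :: nat) \<ge> 1" by (simp add: Suc_leI)
  have L1: "1 \<le> ?L"
  proof -
    have "fact (Suc m) = Suc m * (fact m :: nat)" by simp
    then have "fact (Suc m) \<ge> 2 * (fact m :: nat)" using m by (metis Suc_le_mono mult_le_mono1 one_add_one plus_1_eq_Suc)
    then show ?thesis using fm by linarith
  qed
  have "c ^ (fact m) * exp (rho C \<A> \<B> x0 * real ?L) \<le> c ^ (fact m) * a ?L"
    using rho_exp[OF L1] cpos by simp
  also have "\<dots> \<le> Tk \<A> \<B> ?L N (state x0 \<sigma> (taum e) (fact m))"
    using Tk_N_ge[OF zM_int _ zM_lower] cpos by simp
  also have "\<dots> \<le> (1+e)^?L * Tk \<A> \<B> (?L - ?L) N (state x0 \<sigma> (taum e) (fact m + ?L))"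
    using zM_phase[of ?L m] by simp
  also have "fact m + ?L = fact (Suc m)" using le by simp
  finally show ?thesis by simp
qed

lemma zM_ln:
  assumes m: "1 \<le> m"
  shows "(ln c + real m * (rho C \<A> \<B> x0 - ln (1+e))) / (real m + 1)
    \<le> ln (N (state x0 \<sigma> (taum e) (fact (Suc m)))) / real (fact (Suc m) :: nat)"
proof -
  define \<rho> where "\<rho> = rho C \<A> \<B> x0"
  define F where "F = real (fact m :: nat)"
  define L where "L = real (fact (Suc m) - fact m :: nat)"
  define n where "n = N (state x0 \<sigma> (taum e) (fact (Suc m)))"
  have np: "n > 0" unfolding n_def using N_prop(1)[OF x0 zM_int] .
  have Fp: "F > 0" unfolding F_def by simp
  have le: "fact m \<le> (fact (Suc m) :: nat)" by (rule fact_mono_nat) simp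
  have FS: "real (fact (Suc m) :: nat) = (real m + 1) * F" unfolding F_def by (simp add: algebra_simps)
  have LF: "L = real m * F" unfolding L_def F_def using le by (simp add: of_nat_diff algebra_simps)
  have "c ^ (fact m) * exp (\<rho> * L) \<le> (1+e)^(fact (Suc m) - fact m) * n"
    using zM_end[OF m] unfolding \<rho>_def L_def n_def .
  then have "ln (c ^ (fact m) * exp (\<rho> * L)) \<le> ln ((1+e)^(fact (Suc m) - fact m) * n)"
    using cpos np e by (subst ln_le_cancel_iff) auto
  moreover have "ln (c ^ (fact m) * exp (\<rho> * L)) = F * ln c + \<rho> * L"
    using cpos by (simp add: ln_mult_pos ln_realpow F_def)
  moreover have "ln ((1+e)^(fact (Suc m) - fact m) * n) = L * ln (1+e) + ln n"
    using np e by (simp add: ln_mult_pos ln_realpow L_def)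
  ultimately have "F * ln c + \<rho> * L \<le> L * ln (1+e) + ln n" by simp
  then have "F * (ln c + real m * (\<rho> - ln (1+e))) \<le> ln n" unfolding LF by (simp add: algebra_simps)
  then have "ln c + real m * (\<rho> - ln (1+e)) \<le> ln n / F"
    using Fp by (simp add: pos_le_divide_eq mult.commute)
  then have "(ln c + real m * (\<rho> - ln (1+e))) / (real m + 1) \<le> ln n / F / (real m + 1)"
    by (intro divide_right_mono) auto
  then have "(ln c + real m * (\<rho> - ln (1+e))) / (real m + 1) \<le> ln n / ((real m + 1) * F)"
    by (simp add: divide_divide_eq_left mult.commute)
  then show ?thesis unfolding FS n_def \<rho>_def .
qed

lemma zM_payoff:
  assumes d: "\<delta> > 0"
  shows "ereal (rho C \<A> \<B> x0 - ln (1+e) - \<delta>) \<le> payoff C x0 \<sigma> (taum e)"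
proof -
  define \<rho>' where "\<rho>' = rho C \<A> \<B> x0 - ln (1+e)"
  define X where "X = (\<lambda>t. ereal (funk C (state x0 \<sigma> (taum e) t) x0 / real t))"
  define r where "r = (\<lambda>m::nat. fact (Suc (Suc m)) :: nat)"
  have sm: "strict_mono r" unfolding r_def strict_mono_Suc_iff
    by (intro allI fact_less_mono_nat) auto
  define M where "M = nat \<lceil>\<bar>ln c - \<rho>'\<bar> / \<delta>\<rceil>"
  have ev: "\<forall>m\<ge>M. ereal (\<rho>' - \<delta>) \<le> (X \<circ> r) m"
  proof (intro allI impI)
    fix m assume mM: "m \<ge> M"
    have m1: "1 \<le> Suc m" by simp
    have "\<bar>ln c - \<rho>'\<bar> / \<delta> \<le> real m" using mM unfolding M_def by linarith
    then have "\<bar>ln c - \<rho>'\<bar> \<le> \<delta> * (real (Suc m) + 1)" using d by (simp add: field_simps)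
    then have "\<rho>' - \<delta> \<le> \<rho>' + (ln c - \<rho>') / (real (Suc m) + 1)" using d
      by (simp add: field_simps)
    also have "\<rho>' + (ln c - \<rho>') / (real (Suc m) + 1) = (ln c + real (Suc m) * \<rho>') / (real (Suc m) + 1)"
      by (simp add: field_simps)
    also have "\<dots> \<le> ln (N (state x0 \<sigma> (taum e) (fact (Suc (Suc m))))) / real (fact (Suc (Suc m)) :: nat)"
      using zM_ln[OF m1] unfolding \<rho>'_def .
    finally show "ereal (\<rho>' - \<delta>) \<le> (X \<circ> r) m" unfolding X_def r_def by (simp add: funk_Nf)
  qed
  have "ereal (\<rho>' - \<delta>) \<le> limsup (X \<circ> r)"
    using ev by (intro le_Limsup) (auto simp: eventually_sequentially)
  also have "\<dots> \<le> limsup X" using limsup_subseq_mono[OF sm] .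
  finally show ?thesis unfolding payoff_def X_def \<rho>'_def .
qed

end

lemma max_guarantee:
  assumes eps: "\<epsilon> > 0"
  shows "\<exists>\<tau>. is_max_strat \<B> \<tau> \<and> (\<forall>\<sigma>. is_min_strat \<A> \<sigma> \<longrightarrow> payoff C x0 \<sigma> \<tau> \<ge> ereal (rho C \<A> \<B> x0 - \<epsilon>))"
proof -
  define e where "e = \<epsilon>/2"
  have e: "e > 0" using eps by (simp add: e_def)
  have l: "ln (1+e) \<le> e" using ln_add_one_self_le_self e by simp
  show ?thesis
  proof (intro exI conjI allI impI)
    show "is_max_strat \<B> (taum e)" by (rule taum_strat)
    fix \<sigma> assume \<sigma>: "is_min_strat \<A> \<sigma>"
    have "ereal (rho C \<A> \<B> x0 - \<epsilon>) \<le> ereal (rho C \<A> \<B> x0 - ln (1+e) - \<epsilon>/2)"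
      using l unfolding e_def by simp
    also have "\<dots> \<le> payoff C x0 \<sigma> (taum e)" using zM_payoff[OF e \<sigma>, of "\<epsilon>/2"] eps by simp
    finally show "ereal (rho C \<A> \<B> x0 - \<epsilon>) \<le> payoff C x0 \<sigma> (taum e)" .
  qed
qed

lemma game_value: "is_game_value C \<A> \<B> x0 (rho C \<A> \<B> x0)"
  unfolding is_game_value_def
proof (intro allI impI)
  fix \<epsilon> :: real assume eps: "\<epsilon> > 0"
  obtain \<sigma> where s: "is_min_strat \<A> \<sigma>" "\<forall>\<tau>. is_max_strat \<B> \<tau> \<longrightarrow> payoff C x0 \<sigma> \<tau> \<le> ereal (rho C \<A> \<B> x0 + \<epsilon>)"
    using min_guarantee[OF eps] by blast
  obtain \<tau> where t: "is_max_strat \<B> \<tau>" "\<forall>\<sigma>. is_min_strat \<A> \<sigma> \<longrightarrow> payoff C x0 \<sigma> \<tau> \<ge> ereal (rho C \<A> \<B> x0 - \<epsilon>)"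
    using max_guarantee[OF eps] by blast
  show "\<exists>\<sigma>s \<tau>s. is_min_strat \<A> \<sigma>s \<and> is_max_strat \<B> \<tau>s \<and>
        (\<forall>\<tau>. is_max_strat \<B> \<tau> \<longrightarrow> payoff C x0 \<sigma>s \<tau> \<le> ereal (rho C \<A> \<B> x0 + \<epsilon>)) \<and>
        (\<forall>\<sigma>. is_min_strat \<A> \<sigma> \<longrightarrow> payoff C x0 \<sigma> \<tau>s \<ge> ereal (rho C \<A> \<B> x0 - \<epsilon>))"
    using s t by blast
qed

end


lemma vm_mscale: "(x::real^'n) v* ((t::real) *\<^sub>R (A::'n mat)) = t *\<^sub>R (x v* A)"
  by (simp add: vector_matrix_mult_def vec_eq_iff sum_distrib_left mult.assoc mult.left_commute)

lemma le_inv_nat: assumes "\<And>j::nat. j \<ge> 1 \<Longrightarrow> (X::real) \<le> Y / real j" shows "X \<le> 0"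
proof (rule ccontr)
  assume X: "\<not> X \<le> 0"
  define j where "j = nat \<lceil>\<bar>Y\<bar> / X\<rceil> + 1"
  have j1: "j \<ge> 1" unfolding j_def by simp
  have "\<bar>Y\<bar> / X < real j" unfolding j_def by linarith
  then have "\<bar>Y\<bar> < X * real j" using X by (simp add: field_simps)
  then have "Y / real j < X" using j1 by (simp add: field_simps)
  with assms[OF j1] show False by simp
qed

context cset begin

lemma rho_mono_x:
  assumes G0: "gm C x0 \<A> \<B> c K" and G1: "gm C x1 \<A> \<B> c1 K1"
  shows "rho C \<A> \<B> x1 \<le> rho C \<A> \<B> x0"
proof -
  have x0: "x0 \<in> interior C" using G0 gm.x0 by blast
  have x1: "x1 \<in> interior C" using G1 gm.x0 by blast
  define D where "D = Nf C x1 x0 * Nf C x0 x1"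
  have Dp: "D > 0" unfolding D_def using N_prop(1) x0 x1 by simp
  have aD: "ak C \<A> \<B> x1 k \<le> D * ak C \<A> \<B> x0 k" for k
  proof -
    have "\<And>y. y \<in> interior C \<Longrightarrow> Nf C x1 y \<le> Nf C x1 x0 * Nf C x0 y" using N_cross x0 x1 by blast
    from gm.Tk_le[OF G0 good_N[OF x1] good_N[OF x0] N_prop(1)[OF x1 x0] this x1]
    have "ak C \<A> \<B> x1 k \<le> Nf C x1 x0 * Tk \<A> \<B> k (Nf C x0) x1" unfolding ak_def .
    also have "\<dots> \<le> Nf C x1 x0 * (Nf C x0 x1 * ak C \<A> \<B> x0 k)"
      using gm.Tk_N_le[OF G0 x1] N_prop(1)[OF x1 x0] by (intro mult_left_mono) auto
    finally show ?thesis by (simp add: D_def mult.assoc)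
  qed
  show ?thesis unfolding rho_def[of C \<A> \<B> x0]
  proof (rule cINF_greatest)
    show "{1::nat..} \<noteq> {}" by auto
    fix k :: nat assume "k \<in> {1..}"
    then have k: "k \<ge> 1" by simp
    have "rho C \<A> \<B> x1 - ln (ak C \<A> \<B> x0 k) / real k \<le> 0"
    proof (rule le_inv_nat)
      fix j :: nat assume j: "j \<ge> 1"
      have jk: "j * k \<ge> 1" using j k by simp
      have p0: "ak C \<A> \<B> x0 (j*k) > 0" using gm.a_pos[OF G0] .
      have p1: "ak C \<A> \<B> x0 k > 0" using gm.a_pos[OF G0] .
      have "rho C \<A> \<B> x1 \<le> ln (ak C \<A> \<B> x1 (j*k)) / real (j*k)" using gm.rho_le[OF G1 jk] .
      also have "ln (ak C \<A> \<B> x1 (j*k)) \<le> ln (D * ak C \<A> \<B> x0 (j*k))"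
        using aD gm.a_pos[OF G1] by (subst ln_le_cancel_iff) (auto simp: Dp p0)
      also have "\<dots> = ln D + ln (ak C \<A> \<B> x0 (j*k))" using Dp p0 by (simp add: ln_mult_pos)
      also have "ln (ak C \<A> \<B> x0 (j*k)) \<le> ln (ak C \<A> \<B> x0 k ^ j)"
        using gm.a_pow[OF G0] p0 p1 by (subst ln_le_cancel_iff) auto
      also have "\<dots> = real j * ln (ak C \<A> \<B> x0 k)" by (simp add: ln_realpow)
      finally have "rho C \<A> \<B> x1 \<le> (ln D + real j * ln (ak C \<A> \<B> x0 k)) / real (j*k)"
        using jk by (simp add: divide_right_mono)
      also have "\<dots> = ln D / real (j*k) + ln (ak C \<A> \<B> x0 k) / real k" using j k by (simp add: field_simps)
      also have "ln D / real (j*k) \<le> \<bar>ln D\<bar> / real j"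
      proof -
        have "ln D / real (j*k) \<le> \<bar>ln D\<bar> / real (j*k)" by (intro divide_right_mono) auto
        moreover have "j \<le> j*k" using k by simp
        then have "real j \<le> real (j*k)" by (simp only: of_nat_le_iff)
        then have "\<bar>ln D\<bar> / real (j*k) \<le> \<bar>ln D\<bar> / real j"
          using j by (intro divide_left_mono) auto
        ultimately show ?thesis by linarith
      qed
      finally show "rho C \<A> \<B> x1 - ln (ak C \<A> \<B> x0 k) / real k \<le> \<bar>ln D\<bar> / real j" by simp
    qed
    then show "rho C \<A> \<B> x1 \<le> ln (ak C \<A> \<B> x0 k) / real k" by simp
  qed
qed

end


context cset begin

lemma end_le_at: "end_le C A A' \<Longrightarrow> y \<in> interior C \<Longrightarrow> cone_le C (y v* A) (y v* A')"
  unfolding end_le_def by blast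

context
  fixes x0 \<A> \<B> \<A>' \<B>' c K c' K' \<delta>
  assumes G: "gm C x0 \<A> \<B> c K" and G': "gm C x0 \<A>' \<B>' c' K'"
    and sA: "\<A>' \<subseteq> \<A>" and sB: "\<B>' \<subseteq> \<B>"
    and nA: "\<forall>A\<in>\<A>. \<exists>A'\<in>\<A>'. end_le C A' (exp \<delta> *\<^sub>R A)"
    and nB: "\<forall>B\<in>\<B>. \<exists>B'\<in>\<B>'. end_le C B (exp \<delta> *\<^sub>R B')"
begin

lemma Top_compare1:
  assumes g: "good C g" and y: "y \<in> interior C"
  shows "Top \<A>' \<B>' g y \<le> exp \<delta> * Top \<A> \<B> g y"
proof -
  have ep: "exp \<delta> > 0" by simp
  have "Top \<A>' \<B>' g y / exp \<delta> \<le> Top \<A> \<B> g y" unfolding Top_def[of \<A> \<B>]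
  proof (rule cINF_greatest)
    show "\<A> \<noteq> {}" using gm.Ane[OF G] .
    fix A assume A: "A \<in> \<A>"
    obtain A' where A': "A' \<in> \<A>'" "end_le C A' (exp \<delta> *\<^sub>R A)" using nA A by blast
    have "(SUP B\<in>\<B>'. g ((y v* A') v* B)) \<le> exp \<delta> * (SUP B\<in>\<B>. g ((y v* A) v* B))"
    proof (rule cSUP_least)
      show "\<B>' \<noteq> {}" using gm.Bne[OF G'] .
      fix B assume B': "B \<in> \<B>'"
      then have B: "B \<in> \<B>" using sB by blast
      have BE: "B \<in> End_int C" using gm.BE[OF G] B by blast
      have "cone_le C (y v* A') (exp \<delta> *\<^sub>R (y v* A))" using end_le_at[OF A'(2) y] by (simp add: vm_mscale)
      from End_mono[OF BE this] have "cone_le C ((y v* A') v* B) (exp \<delta> *\<^sub>R ((y v* A) v* B))"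
        by (simp add: vm_scale)
      then have "g ((y v* A') v* B) \<le> g (exp \<delta> *\<^sub>R ((y v* A) v* B))"
        using good_mono[OF g gm.AB_int[OF G' y A'(1) B'] int_scale[OF gm.AB_int[OF G y A B] ep]] by blast
      also have "\<dots> = exp \<delta> * g ((y v* A) v* B)" using good_homog[OF g gm.AB_int[OF G y A B] ep] .
      also have "\<dots> \<le> exp \<delta> * (SUP B\<in>\<B>. g ((y v* A) v* B))"
        using cSUP_upper[OF B gm.bdd_B[OF G g y A]] by simp
      finally show "g ((y v* A') v* B) \<le> exp \<delta> * (SUP B\<in>\<B>. g ((y v* A) v* B))" .
    qed
    moreover have "Top \<A>' \<B>' g y \<le> (SUP B\<in>\<B>'. g ((y v* A') v* B))"
      unfolding Top_def using cINF_lower[OF gm.bdd_A[OF G' g y] A'(1)] .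
    ultimately have "Top \<A>' \<B>' g y \<le> exp \<delta> * (SUP B\<in>\<B>. g ((y v* A) v* B))" by linarith
    then show "Top \<A>' \<B>' g y / exp \<delta> \<le> (SUP B\<in>\<B>. g ((y v* A) v* B))" by (simp add: field_simps)
  qed
  then show ?thesis by (simp add: field_simps)
qed

lemma Top_compare2:
  assumes g: "good C g" and y: "y \<in> interior C"
  shows "Top \<A> \<B> g y \<le> exp \<delta> * Top \<A>' \<B>' g y"
proof -
  have ep: "exp \<delta> > 0" by simp
  have "Top \<A> \<B> g y / exp \<delta> \<le> Top \<A>' \<B>' g y" unfolding Top_def[of \<A>' \<B>']
  proof (rule cINF_greatest)
    show "\<A>' \<noteq> {}" using gm.Ane[OF G'] .
    fix A assume A': "A \<in> \<A>'"
    then have A: "A \<in> \<A>" using sA by blast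
    have yA: "y v* A \<in> interior C" using End_int gm.AE[OF G] A y by blast
    have "(SUP B\<in>\<B>. g ((y v* A) v* B)) \<le> exp \<delta> * (SUP B\<in>\<B>'. g ((y v* A) v* B))"
    proof (rule cSUP_least)
      show "\<B> \<noteq> {}" using gm.Bne[OF G] .
      fix B assume B: "B \<in> \<B>"
      obtain B' where B': "B' \<in> \<B>'" "end_le C B (exp \<delta> *\<^sub>R B')" using nB B by blast
      have "cone_le C ((y v* A) v* B) (exp \<delta> *\<^sub>R ((y v* A) v* B'))"
        using end_le_at[OF B'(2) yA] by (simp add: vm_mscale)
      then have "g ((y v* A) v* B) \<le> g (exp \<delta> *\<^sub>R ((y v* A) v* B'))"
        using good_mono[OF g gm.AB_int[OF G y A B] int_scale[OF gm.AB_int[OF G' y A' B'(1)] ep]] by blast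
      also have "\<dots> = exp \<delta> * g ((y v* A) v* B')" using good_homog[OF g gm.AB_int[OF G' y A' B'(1)] ep] .
      also have "\<dots> \<le> exp \<delta> * (SUP B\<in>\<B>'. g ((y v* A) v* B))"
        using cSUP_upper[OF B'(1) gm.bdd_B[OF G' g y A']] by simp
      finally show "g ((y v* A) v* B) \<le> exp \<delta> * (SUP B\<in>\<B>'. g ((y v* A) v* B))" .
    qed
    moreover have "Top \<A> \<B> g y \<le> (SUP B\<in>\<B>. g ((y v* A) v* B))"
      unfolding Top_def using cINF_lower[OF gm.bdd_A[OF G g y] A] .
    ultimately have "Top \<A> \<B> g y \<le> exp \<delta> * (SUP B\<in>\<B>'. g ((y v* A) v* B))" by linarith
    then show "Top \<A> \<B> g y / exp \<delta> \<le> (SUP B\<in>\<B>'. g ((y v* A) v* B))" by (simp add: field_simps)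
  qed
  then show ?thesis by (simp add: field_simps)
qed

lemma Tk_compare:
  assumes g: "good C g"
  shows "y \<in> interior C \<Longrightarrow> Tk \<A>' \<B>' k g y \<le> exp (real k * \<delta>) * Tk \<A> \<B> k g y
     \<and> Tk \<A> \<B> k g y \<le> exp (real k * \<delta>) * Tk \<A>' \<B>' k g y"
proof (induction k arbitrary: y)
  case 0 then show ?case by simp
next
  case (Suc k)
  have e: "exp (real (Suc k) * \<delta>) = exp (real k * \<delta>) * exp \<delta>" by (simp add: algebra_simps exp_add)
  have g1: "good C (Tk \<A> \<B> k g)" using gm.Tk_good[OF G g] .
  have g2: "good C (Tk \<A>' \<B>' k g)" using gm.Tk_good[OF G' g] .
  have ek: "exp (real k * \<delta>) > 0" by simp
  have "Tk \<A>' \<B>' (Suc k) g y \<le> Top \<A>' \<B>' (\<lambda>z. exp (real k * \<delta>) * Tk \<A> \<B> k g z) y"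
    unfolding Tk_Suc using gm.Top_mono[OF G' g2 good_cmult[OF g1 ek] _ Suc.prems] Suc.IH by blast
  also have "\<dots> = exp (real k * \<delta>) * Top \<A>' \<B>' (Tk \<A> \<B> k g) y" using gm.Top_cmult[OF G' g1 ek Suc.prems] .
  also have "\<dots> \<le> exp (real k * \<delta>) * (exp \<delta> * Top \<A> \<B> (Tk \<A> \<B> k g) y)"
    using Top_compare1[OF g1 Suc.prems] by (intro mult_left_mono) auto
  finally have 1: "Tk \<A>' \<B>' (Suc k) g y \<le> exp (real (Suc k) * \<delta>) * Tk \<A> \<B> (Suc k) g y"
    unfolding e Tk_Suc by (simp add: mult.assoc)
  have "Tk \<A> \<B> (Suc k) g y \<le> Top \<A> \<B> (\<lambda>z. exp (real k * \<delta>) * Tk \<A>' \<B>' k g z) y"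
    unfolding Tk_Suc using gm.Top_mono[OF G g1 good_cmult[OF g2 ek] _ Suc.prems] Suc.IH by blast
  also have "\<dots> = exp (real k * \<delta>) * Top \<A> \<B> (Tk \<A>' \<B>' k g) y" using gm.Top_cmult[OF G g2 ek Suc.prems] .
  also have "\<dots> \<le> exp (real k * \<delta>) * (exp \<delta> * Top \<A>' \<B>' (Tk \<A>' \<B>' k g) y)"
    using Top_compare2[OF g2 Suc.prems] by (intro mult_left_mono) auto
  finally have 2: "Tk \<A> \<B> (Suc k) g y \<le> exp (real (Suc k) * \<delta>) * Tk \<A>' \<B>' (Suc k) g y"
    unfolding e Tk_Suc by (simp add: mult.assoc)
  show ?case using 1 2 by blast
qed

lemma rho_compare: "\<bar>rho C \<A> \<B> x0 - rho C \<A>' \<B>' x0\<bar> \<le> \<delta>"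
proof -
  have x0: "x0 \<in> interior C" using gm.x0[OF G] .
  have ln1: "ln (ak C \<A>' \<B>' x0 k) / real k \<le> \<delta> + ln (ak C \<A> \<B> x0 k) / real k"
    and ln2: "ln (ak C \<A> \<B> x0 k) / real k \<le> \<delta> + ln (ak C \<A>' \<B>' x0 k) / real k" if k: "k \<ge> 1" for k
  proof -
    have p: "ak C \<A> \<B> x0 k > 0" using gm.a_pos[OF G] .
    have p': "ak C \<A>' \<B>' x0 k > 0" using gm.a_pos[OF G'] .
    have kp: "real k > 0" using k by simp
    from Tk_compare[OF good_N[OF x0] x0, of k]
    have c1: "ak C \<A>' \<B>' x0 k \<le> exp (real k * \<delta>) * ak C \<A> \<B> x0 k"
      and c2: "ak C \<A> \<B> x0 k \<le> exp (real k * \<delta>) * ak C \<A>' \<B>' x0 k" unfolding ak_def by auto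
    have "ln (ak C \<A>' \<B>' x0 k) \<le> ln (exp (real k * \<delta>) * ak C \<A> \<B> x0 k)"
      using c1 p p' by (subst ln_le_cancel_iff) auto
    also have "\<dots> = real k * \<delta> + ln (ak C \<A> \<B> x0 k)" using p by (simp add: ln_mult_pos)
    finally have "ln (ak C \<A>' \<B>' x0 k) \<le> real k * \<delta> + ln (ak C \<A> \<B> x0 k)" .
    then show "ln (ak C \<A>' \<B>' x0 k) / real k \<le> \<delta> + ln (ak C \<A> \<B> x0 k) / real k"
      using kp by (simp add: field_simps)
    have "ln (ak C \<A> \<B> x0 k) \<le> ln (exp (real k * \<delta>) * ak C \<A>' \<B>' x0 k)"
      using c2 p p' by (subst ln_le_cancel_iff) auto
    also have "\<dots> = real k * \<delta> + ln (ak C \<A>' \<B>' x0 k)" using p' by (simp add: ln_mult_pos)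
    finally have "ln (ak C \<A> \<B> x0 k) \<le> real k * \<delta> + ln (ak C \<A>' \<B>' x0 k)" .
    then show "ln (ak C \<A> \<B> x0 k) / real k \<le> \<delta> + ln (ak C \<A>' \<B>' x0 k) / real k"
      using kp by (simp add: field_simps)
  qed
  have "rho C \<A>' \<B>' x0 - \<delta> \<le> rho C \<A> \<B> x0" unfolding rho_def[of C \<A> \<B>]
  proof (rule cINF_greatest)
    fix k :: nat assume "k \<in> {1..}"
    then have k: "k \<ge> 1" by simp
    show "rho C \<A>' \<B>' x0 - \<delta> \<le> ln (ak C \<A> \<B> x0 k) / real k" using gm.rho_le[OF G' k] ln1[OF k] by linarith
  qed auto
  moreover have "rho C \<A> \<B> x0 - \<delta> \<le> rho C \<A>' \<B>' x0" unfolding rho_def[of C \<A>' \<B>']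
  proof (rule cINF_greatest)
    fix k :: nat assume "k \<in> {1..}"
    then have k: "k \<ge> 1" by simp
    show "rho C \<A> \<B> x0 - \<delta> \<le> ln (ak C \<A>' \<B>' x0 k) / real k" using gm.rho_le[OF G k] ln2[OF k] by linarith
  qed auto
  ultimately show ?thesis by linarith
qed

end
end


definition enew :: "('a \<Rightarrow> 'a \<Rightarrow> bool) \<Rightarrow> 'a set \<Rightarrow> 'a list \<Rightarrow> 'a" where
  "enew cl S xs = (SOME A. A \<in> S \<and> (\<forall>A'\<in>set xs. \<not> cl A' A))"

primrec seqL :: "('a \<Rightarrow> 'a \<Rightarrow> bool) \<Rightarrow> 'a set \<Rightarrow> nat \<Rightarrow> 'a list" where
  "seqL cl S 0 = []"
| "seqL cl S (Suc n) = seqL cl S n @ [enew cl S (seqL cl S n)]"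

definition eseq :: "('a \<Rightarrow> 'a \<Rightarrow> bool) \<Rightarrow> 'a set \<Rightarrow> nat \<Rightarrow> 'a" where
  "eseq cl S n = enew cl S (seqL cl S n)"

lemma eseq_P:
  assumes H: "\<And>F. finite F \<Longrightarrow> F \<subseteq> S \<Longrightarrow> \<exists>A\<in>S. \<forall>A'\<in>F. \<not> cl A' A"
  shows "set (seqL cl S n) \<subseteq> S \<and> eseq cl S n \<in> S \<and> (\<forall>A'\<in>set (seqL cl S n). \<not> cl A' (eseq cl S n))"
proof (induction n)
  case 0
  have "\<exists>A. A \<in> S \<and> (\<forall>A'\<in>set (seqL cl S 0). \<not> cl A' A)" using H[of "{}"] by simp
  from someI_ex[OF this] show ?case unfolding eseq_def enew_def by simp
next
  case (Suc n)
  have s: "set (seqL cl S (Suc n)) \<subseteq> S" using Suc by (simp add: eseq_def)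
  have "finite (set (seqL cl S (Suc n)))" by simp
  from H[OF this s] have "\<exists>A. A \<in> S \<and> (\<forall>A'\<in>set (seqL cl S (Suc n)). \<not> cl A' A)" by blast
  from someI_ex[OF this] have "enew cl S (seqL cl S (Suc n)) \<in> S \<and> (\<forall>A'\<in>set (seqL cl S (Suc n)). \<not> cl A' (enew cl S (seqL cl S (Suc n))))"
    unfolding enew_def .
  with s show ?case unfolding eseq_def by simp
qed

lemma eseq_mem: "i < j \<Longrightarrow> eseq cl S i \<in> set (seqL cl S j)"
proof (induction j)
  case 0 then show ?case by simp
next
  case (Suc j)
  show ?case
  proof (cases "i = j")
    case True then show ?thesis by (simp add: eseq_def)
  next
    case False then have "i < j" using Suc.prems by simp
    then show ?thesis using Suc.IH by simp
  qed
qed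

lemma no_net_seq:
  assumes H: "\<And>F. finite F \<Longrightarrow> F \<subseteq> S \<Longrightarrow> \<exists>A\<in>S. \<forall>A'\<in>F. \<not> cl A' A"
  shows "\<exists>f::nat \<Rightarrow> 'a. (\<forall>n. f n \<in> S) \<and> (\<forall>i j. i < j \<longrightarrow> \<not> cl (f i) (f j))"
proof (rule exI[of _ "eseq cl S"], intro conjI allI impI)
  fix n show "eseq cl S n \<in> S" using eseq_P[OF H] by blast
next
  fix i j :: nat assume ij: "i < j"
  have "eseq cl S i \<in> set (seqL cl S j)" using eseq_mem[OF ij] .
  then show "\<not> cl (eseq cl S i) (eseq cl S j)" using eseq_P[OF H, of j] by blast
qed

context cset begin

lemma end_le_trans: "end_le C A B \<Longrightarrow> end_le C B D \<Longrightarrow> end_le C A D"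
  unfolding end_le_def
proof (intro ballI)
  fix x assume 1: "\<forall>x\<in>interior C. cone_le C (x v* A) (x v* B)" and 2: "\<forall>x\<in>interior C. cone_le C (x v* B) (x v* D)"
    and x: "x \<in> interior C"
  show "cone_le C (x v* A) (x v* D)" using le_trans[OF 1[rule_format, OF x] 2[rule_format, OF x]] .
qed
lemma end_le_scale: "end_le C A B \<Longrightarrow> 0 \<le> t \<Longrightarrow> end_le C (t *\<^sub>R A) (t *\<^sub>R B)"
  unfolding end_le_def
proof (intro ballI)
  fix x assume 1: "\<forall>x\<in>interior C. cone_le C (x v* A) (x v* B)" and t: "0 \<le> t" and x: "x \<in> interior C"
  have "cone_le C (t *\<^sub>R (x v* A)) (t *\<^sub>R (x v* B))" using le_scale[OF 1[rule_format, OF x] t] .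
  then show "cone_le C (x v* (t *\<^sub>R A)) (x v* (t *\<^sub>R B))" by (simp only: vm_mscale)
qed
lemma end_le_scalar: "R \<in> End_int C \<Longrightarrow> s \<le> t \<Longrightarrow> end_le C (s *\<^sub>R R) (t *\<^sub>R R)"
  unfolding end_le_def
proof (intro ballI)
  fix x assume R: "R \<in> End_int C" and st: "s \<le> t" and x: "x \<in> interior C"
  have "x v* R \<in> C" using End_int[OF R x] intC by blast
  then have "(t - s) *\<^sub>R (x v* R) \<in> C" using C_scale st by simp
  then show "cone_le C (x v* (s *\<^sub>R R)) (x v* (t *\<^sub>R R))" unfolding cone_le_def vm_mscale scaleR_diff_left .
qed
lemma end_le_chain: "end_le C A (l *\<^sub>R B) \<Longrightarrow> end_le C B (m *\<^sub>R D) \<Longrightarrow> l \<ge> 0 \<Longrightarrow> end_le C A ((l * m) *\<^sub>R D)"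
proof -
  assume 1: "end_le C A (l *\<^sub>R B)" and 2: "end_le C B (m *\<^sub>R D)" and l: "l \<ge> 0"
  have "end_le C (l *\<^sub>R B) (l *\<^sub>R (m *\<^sub>R D))" using end_le_scale[OF 2 l] .
  then have "end_le C (l *\<^sub>R B) ((l * m) *\<^sub>R D)" by simp
  from end_le_trans[OF 1 this] show ?thesis .
qed

lemma funk_end_lt:
  assumes c: "end_le C A (c0 *\<^sub>R A')" "c0 > 0" and f: "funk_end C A A' < s"
  shows "\<exists>l>0. l < exp s \<and> end_le C A (l *\<^sub>R A')"
proof -
  define S where "S = {l. l > 0 \<and> end_le C A (l *\<^sub>R A')}"
  have ne: "S \<noteq> {}" using c by (auto simp: S_def)
  have i0: "0 \<le> Inf S" using ne by (intro cInf_greatest) (auto simp: S_def)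
  have "Inf S < exp s"
  proof (cases "Inf S = 0")
    case True then show ?thesis by simp
  next
    case False
    then have ip: "Inf S > 0" using i0 by simp
    have "ln (Inf S) < s" using f unfolding funk_end_def S_def by simp
    then have "exp (ln (Inf S)) < exp s" by simp
    then show ?thesis using ip by simp
  qed
  from cInf_lessD[OF ne this] show ?thesis by (auto simp: S_def)
qed

lemma cmp_up: "comparable C A A' \<Longrightarrow> \<exists>c>0. end_le C A' (c *\<^sub>R A)"
  unfolding comparable_def by blast
lemma cmp_low: "comparable C A A' \<Longrightarrow> \<exists>m>0. end_le C (m *\<^sub>R A) A'"
  unfolding comparable_def by blast

lemma conv_close:
  assumes P: "in_same_part C U" and SU: "S \<subseteq> U" and l: "l \<in> S" and f: "\<And>k. f k \<in> S"
    and lim: "(\<lambda>k. thompson C (f k) l) \<longlonglongrightarrow> 0" and s: "s > 0"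
  shows "eventually (\<lambda>k. (\<exists>m>0. m < exp s \<and> end_le C (f k) (m *\<^sub>R l)) \<and>
                         (\<exists>m>0. m < exp s \<and> end_le C l (m *\<^sub>R f k))) sequentially"
proof -
  have ev: "eventually (\<lambda>k. thompson C (f k) l < s) sequentially" using order_tendstoD(2)[OF lim s] .
  show ?thesis
  proof (rule eventually_mono[OF ev])
    fix k assume t: "thompson C (f k) l < s"
    have c1: "comparable C l (f k)" and c2: "comparable C (f k) l" using P SU l f unfolding in_same_part_def by blast+
    obtain c0 where c0: "c0 > 0" "end_le C (f k) (c0 *\<^sub>R l)" using cmp_up[OF c1] by blast
    obtain c1' where c1': "c1' > 0" "end_le C l (c1' *\<^sub>R f k)" using cmp_up[OF c2] by blast
    have "funk_end C (f k) l < s" "funk_end C l (f k) < s" using t unfolding thompson_def by auto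
    then show "(\<exists>m>0. m < exp s \<and> end_le C (f k) (m *\<^sub>R l)) \<and> (\<exists>m>0. m < exp s \<and> end_le C l (m *\<^sub>R f k))"
      using funk_end_lt[OF c0(2,1)] funk_end_lt[OF c1'(2,1)] by blast
  qed
qed

lemma part_upper:
  assumes P: "in_same_part C U" and SU: "S \<subseteq> U" and TC: "thompson_compact C S" and R0: "R0 \<in> U"
  shows "\<exists>L>0. \<forall>A\<in>S. end_le C A (L *\<^sub>R R0)"
proof (rule ccontr)
  assume nt: "\<not> (\<exists>L>0. \<forall>A\<in>S. end_le C A (L *\<^sub>R R0))"
  have ex: "\<forall>n::nat. \<exists>A. A \<in> S \<and> \<not> end_le C A ((real n + 1) *\<^sub>R R0)"
  proof
    fix n :: nat
    have pos: "real n + 1 > 0" by simp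
    show "\<exists>A. A \<in> S \<and> \<not> end_le C A ((real n + 1) *\<^sub>R R0)"
    proof (rule ccontr)
      assume "\<not> (\<exists>A. A \<in> S \<and> \<not> end_le C A ((real n + 1) *\<^sub>R R0))"
      then have "\<forall>A\<in>S. end_le C A ((real n + 1) *\<^sub>R R0)" by auto
      with pos have "\<exists>L>0. \<forall>A\<in>S. end_le C A (L *\<^sub>R R0)" by (intro exI[of _ "real n + 1"]) auto
      with nt show False by simp
    qed
  qed
  obtain f where "\<forall>n. f n \<in> S \<and> \<not> end_le C (f n) ((real n + 1) *\<^sub>R R0)" using choice[OF ex] by blast
  then have f: "\<And>n. f n \<in> S" "\<And>n. \<not> end_le C (f n) ((real n + 1) *\<^sub>R R0)" by auto
  obtain l and r :: "nat \<Rightarrow> nat" where l: "l \<in> S" "strict_mono r" "(\<lambda>k. thompson C (f (r k)) l) \<longlonglongrightarrow> 0"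
    using TC f(1) unfolding thompson_compact_def by blast
  have R0E: "R0 \<in> End_int C" using P R0 unfolding in_same_part_def by blast
  have cR: "comparable C R0 l" using P R0 SU l(1) unfolding in_same_part_def by blast
  obtain c0 where c0: "c0 > 0" "end_le C l (c0 *\<^sub>R R0)" using cmp_up[OF cR] by blast
  have ev: "eventually (\<lambda>k. \<exists>m>0. m < exp 1 \<and> end_le C (f (r k)) (m *\<^sub>R l)) sequentially"
    using conv_close[OF P SU l(1) f(1) l(3) zero_less_one] by (rule eventually_mono) (elim conjE)
  then obtain k0 where k0: "\<And>k. k \<ge> k0 \<Longrightarrow> \<exists>m>0. m < exp 1 \<and> end_le C (f (r k)) (m *\<^sub>R l)"
    unfolding eventually_sequentially by blast
  define k where "k = max k0 (nat \<lceil>exp 1 * c0\<rceil>)"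
  obtain m where m: "m > 0" "m < exp 1" "end_le C (f (r k)) (m *\<^sub>R l)" using k0[of k] unfolding k_def by auto
  have X: "end_le C (f (r k)) ((m * c0) *\<^sub>R R0)" using end_le_chain[OF m(3) c0(2)] m by simp
  have le: "m * c0 \<le> real (r k) + 1"
  proof -
    have "m * c0 \<le> exp 1 * c0" using m c0 by simp
    also have "\<dots> \<le> real (nat \<lceil>exp 1 * c0\<rceil>)" by (rule real_nat_ceiling_ge)
    also have "\<dots> \<le> real k" unfolding k_def by simp
    also have "\<dots> \<le> real (r k)" using seq_suble[OF l(2)] by simp
    finally show ?thesis by simp
  qed
  have "end_le C (f (r k)) ((real (r k) + 1) *\<^sub>R R0)"
    using end_le_trans[OF X end_le_scalar[OF R0E le]] .
  then show False using f(2) by blast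
qed

lemma part_lower:
  assumes P: "in_same_part C U" and SU: "S \<subseteq> U" and TC: "thompson_compact C S" and R0: "R0 \<in> U"
  shows "\<exists>\<mu>>0. \<forall>A\<in>S. end_le C (\<mu> *\<^sub>R R0) A"
proof (rule ccontr)
  assume nt: "\<not> (\<exists>\<mu>>0. \<forall>A\<in>S. end_le C (\<mu> *\<^sub>R R0) A)"
  have ex: "\<forall>n::nat. \<exists>A. A \<in> S \<and> \<not> end_le C ((1 / (real n + 1)) *\<^sub>R R0) A"
  proof
    fix n :: nat
    have pos: "1 / (real n + 1) > 0" by simp
    show "\<exists>A. A \<in> S \<and> \<not> end_le C ((1 / (real n + 1)) *\<^sub>R R0) A"
    proof (rule ccontr)
      assume "\<not> (\<exists>A. A \<in> S \<and> \<not> end_le C ((1 / (real n + 1)) *\<^sub>R R0) A)"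
      then have "\<forall>A\<in>S. end_le C ((1 / (real n + 1)) *\<^sub>R R0) A" by auto
      with pos have "\<exists>\<mu>>0. \<forall>A\<in>S. end_le C (\<mu> *\<^sub>R R0) A" by (intro exI[of _ "1 / (real n + 1)"]) auto
      with nt show False by simp
    qed
  qed
  obtain f where "\<forall>n. f n \<in> S \<and> \<not> end_le C ((1 / (real n + 1)) *\<^sub>R R0) (f n)" using choice[OF ex] by blast
  then have f: "\<And>n. f n \<in> S" "\<And>n. \<not> end_le C ((1 / (real n + 1)) *\<^sub>R R0) (f n)" by auto
  obtain l and r :: "nat \<Rightarrow> nat" where l: "l \<in> S" "strict_mono r" "(\<lambda>k. thompson C (f (r k)) l) \<longlonglongrightarrow> 0"
    using TC f(1) unfolding thompson_compact_def by blast
  have R0E: "R0 \<in> End_int C" using P R0 unfolding in_same_part_def by blast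
  have cR: "comparable C R0 l" using P R0 SU l(1) unfolding in_same_part_def by blast
  obtain m0 where m0: "m0 > 0" "end_le C (m0 *\<^sub>R R0) l" using cmp_low[OF cR] by blast
  have ev: "eventually (\<lambda>k. \<exists>m>0. m < exp 1 \<and> end_le C l (m *\<^sub>R f (r k))) sequentially"
    using conv_close[OF P SU l(1) f(1) l(3) zero_less_one] by (rule eventually_mono) (elim conjE)
  then obtain k0 where k0: "\<And>k. k \<ge> k0 \<Longrightarrow> \<exists>m>0. m < exp 1 \<and> end_le C l (m *\<^sub>R f (r k))"
    unfolding eventually_sequentially by blast
  define k where "k = max k0 (nat \<lceil>exp 1 / m0\<rceil>)"
  obtain m where m: "m > 0" "m < exp 1" "end_le C l (m *\<^sub>R f (r k))" using k0[of k] unfolding k_def by auto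
  have "end_le C (m0 *\<^sub>R R0) (m *\<^sub>R f (r k))" using end_le_trans[OF m0(2) m(3)] .
  from end_le_scale[OF this, of "1/m"] m have "end_le C ((1/m) *\<^sub>R (m0 *\<^sub>R R0)) ((1/m) *\<^sub>R (m *\<^sub>R f (r k)))" by simp
  then have 1: "end_le C ((m0 / m) *\<^sub>R R0) (f (r k))" using m by simp
  have "1 / (real (r k) + 1) \<le> m0 / m"
  proof -
    have "exp 1 / m0 \<le> real (nat \<lceil>exp 1 / m0\<rceil>)" by (rule real_nat_ceiling_ge)
    also have "\<dots> \<le> real k" unfolding k_def by simp
    finally have "exp 1 / m0 \<le> real k" .
    also have "\<dots> \<le> real (r k)" using seq_suble[OF l(2)] by simp
    finally have "exp 1 / m0 \<le> real (r k)" .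
    moreover have "m / m0 \<le> exp 1 / m0" using m m0 by (intro divide_right_mono) auto
    ultimately have "m / m0 \<le> real (r k) + 1" by linarith
    then show ?thesis using m m0 by (simp add: field_simps)
  qed
  then have "end_le C ((1 / (real (r k) + 1)) *\<^sub>R R0) (f (r k))"
    using end_le_trans[OF end_le_scalar[OF R0E] 1] by simp
  then show False using f(2) by blast
qed

lemma vb_bounds:
  assumes x0: "x0 \<in> interior C" and R0E: "R0 \<in> End_int C" and mu: "\<mu> > 0" and L: "L > 0"
    and b: "\<And>A. A \<in> S \<Longrightarrow> end_le C (\<mu> *\<^sub>R R0) A \<and> end_le C A (L *\<^sub>R R0)"
  shows "\<exists>cc>0. \<exists>KK>0. \<forall>A\<in>S. cone_le C (cc *\<^sub>R x0) (x0 v* A) \<and> cone_le C (x0 v* A) (KK *\<^sub>R x0)"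
proof -
  have xR: "x0 v* R0 \<in> interior C" using End_int[OF R0E x0] .
  obtain \<beta> where be: "\<beta> > 0" "cone_le C (\<beta> *\<^sub>R x0) (x0 v* R0)" using int_lower[OF xR] by blast
  have NR: "cone_le C (x0 v* R0) (Nf C x0 (x0 v* R0) *\<^sub>R x0)" "Nf C x0 (x0 v* R0) > 0"
    using N_prop[OF x0 xR] by auto
  show ?thesis
  proof (intro exI conjI ballI)
    show "\<mu> * \<beta> > 0" "L * Nf C x0 (x0 v* R0) > 0" using mu be L NR by auto
    fix A assume A: "A \<in> S"
    have h1: "cone_le C (\<mu> *\<^sub>R (x0 v* R0)) (x0 v* A)"
      using end_le_at[of "\<mu> *\<^sub>R R0" A x0] b[OF A] x0 by (simp add: vm_mscale)
    have h2: "cone_le C (\<mu> *\<^sub>R (\<beta> *\<^sub>R x0)) (\<mu> *\<^sub>R (x0 v* R0))" using le_scale[OF be(2) less_imp_le[OF mu]] .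
    have "cone_le C (\<mu> *\<^sub>R (\<beta> *\<^sub>R x0)) (x0 v* A)" using le_trans[OF h2 h1] .
    then show "cone_le C ((\<mu> * \<beta>) *\<^sub>R x0) (x0 v* A)" by simp
    have h3: "cone_le C (x0 v* A) (L *\<^sub>R (x0 v* R0))"
      using end_le_at[of A "L *\<^sub>R R0" x0] b[OF A] x0 by (simp add: vm_mscale)
    have h4: "cone_le C (L *\<^sub>R (x0 v* R0)) (L *\<^sub>R (Nf C x0 (x0 v* R0) *\<^sub>R x0))" using le_scale[OF NR(1) less_imp_le[OF L]] .
    have "cone_le C (x0 v* A) (L *\<^sub>R (Nf C x0 (x0 v* R0) *\<^sub>R x0))" using le_trans[OF h3 h4] .
    then show "cone_le C (x0 v* A) ((L * Nf C x0 (x0 v* R0)) *\<^sub>R x0)" by simp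
  qed
qed

lemma mk_gm:
  assumes x0: "x0 \<in> interior C" and ne: "\<A> \<noteq> {}" "\<B> \<noteq> {}" and E: "\<A> \<subseteq> End_int C" "\<B> \<subseteq> End_int C"
    and cA: "cA > 0" "KA > 0" "\<forall>A\<in>\<A>. cone_le C (cA *\<^sub>R x0) (x0 v* A) \<and> cone_le C (x0 v* A) (KA *\<^sub>R x0)"
    and cB: "cB > 0" "KB > 0" "\<forall>B\<in>\<B>. cone_le C (cB *\<^sub>R x0) (x0 v* B) \<and> cone_le C (x0 v* B) (KB *\<^sub>R x0)"
  shows "gm C x0 \<A> \<B> (cA * cB) (KA * KB)"
proof -
  have bnd: "cone_le C ((cA * cB) *\<^sub>R x0) ((x0 v* A) v* B) \<and> cone_le C ((x0 v* A) v* B) ((KA * KB) *\<^sub>R x0)"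
    if A: "A \<in> \<A>" and B: "B \<in> \<B>" for A B
  proof
    have BE: "B \<in> End_int C" using E B by blast
    have a1: "cone_le C (cA *\<^sub>R x0) (x0 v* A)" "cone_le C (x0 v* A) (KA *\<^sub>R x0)" using cA(3) A by auto
    have b1: "cone_le C (cB *\<^sub>R x0) (x0 v* B)" "cone_le C (x0 v* B) (KB *\<^sub>R x0)" using cB(3) B by auto
    have h1: "cone_le C (cA *\<^sub>R (x0 v* B)) ((x0 v* A) v* B)" using End_mono[OF BE a1(1)] by (simp only: vm_scale)
    have h2: "cone_le C (cA *\<^sub>R (cB *\<^sub>R x0)) (cA *\<^sub>R (x0 v* B))" using le_scale[OF b1(1) less_imp_le[OF cA(1)]] .
    have "cone_le C (cA *\<^sub>R (cB *\<^sub>R x0)) ((x0 v* A) v* B)" using le_trans[OF h2 h1] .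
    then show "cone_le C ((cA * cB) *\<^sub>R x0) ((x0 v* A) v* B)" by simp
    have h3: "cone_le C ((x0 v* A) v* B) (KA *\<^sub>R (x0 v* B))" using End_mono[OF BE a1(2)] by (simp only: vm_scale)
    have h4: "cone_le C (KA *\<^sub>R (x0 v* B)) (KA *\<^sub>R (KB *\<^sub>R x0))" using le_scale[OF b1(2) less_imp_le[OF cA(2)]] .
    have "cone_le C ((x0 v* A) v* B) (KA *\<^sub>R (KB *\<^sub>R x0))" using le_trans[OF h3 h4] .
    then show "cone_le C ((x0 v* A) v* B) ((KA * KB) *\<^sub>R x0)" by simp
  qed
  show ?thesis unfolding gm_def gm_axioms_def using cset_axioms x0 ne E cA cB bnd by auto
qed

lemma part_net:
  assumes P: "in_same_part C U" and SU: "S \<subseteq> U" and TC: "thompson_compact C S" and ne: "S \<noteq> {}"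
    and d: "\<delta> > 0"
  shows "\<exists>F. finite F \<and> F \<noteq> {} \<and> F \<subseteq> S \<and> (\<forall>A\<in>S. \<exists>A'\<in>F. end_le C A' (exp \<delta> *\<^sub>R A) \<and> end_le C A (exp \<delta> *\<^sub>R A'))"
proof (rule ccontr)
  assume nn: "\<not> (\<exists>F. finite F \<and> F \<noteq> {} \<and> F \<subseteq> S \<and> (\<forall>A\<in>S. \<exists>A'\<in>F. end_le C A' (exp \<delta> *\<^sub>R A) \<and> end_le C A (exp \<delta> *\<^sub>R A')))"
  define cl where "cl A' A = (end_le C A' (exp \<delta> *\<^sub>R A) \<and> end_le C A (exp \<delta> *\<^sub>R A'))" for A' A
  have H: "\<exists>A\<in>S. \<forall>A'\<in>F. \<not> cl A' A" if F: "finite F" "F \<subseteq> S" for F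
  proof (cases "F = {}")
    case True then show ?thesis using ne by auto
  next
    case False
    have "\<not> (\<forall>A\<in>S. \<exists>A'\<in>F. cl A' A)"
    proof
      assume "\<forall>A\<in>S. \<exists>A'\<in>F. cl A' A"
      then have "finite F \<and> F \<noteq> {} \<and> F \<subseteq> S \<and> (\<forall>A\<in>S. \<exists>A'\<in>F. end_le C A' (exp \<delta> *\<^sub>R A) \<and> end_le C A (exp \<delta> *\<^sub>R A'))"
        using F False unfolding cl_def by simp
      then show False using nn by blast
    qed
    then show ?thesis by simp
  qed
  obtain f :: "nat \<Rightarrow> 'n mat" where f0: "(\<forall>n. f n \<in> S) \<and> (\<forall>i j. i < j \<longrightarrow> \<not> cl (f i) (f j))"
    using no_net_seq[of S cl, OF H] by blast
  then have f: "\<And>n. f n \<in> S" "\<And>i j. i < j \<Longrightarrow> \<not> cl (f i) (f j)" by auto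
  have ex: "\<exists>l\<in>S. \<exists>r::nat\<Rightarrow>nat. strict_mono r \<and> (\<lambda>k. thompson C (f (r k)) l) \<longlonglongrightarrow> 0"
    using TC[unfolded thompson_compact_def, rule_format, OF f(1)] .
  then obtain l where l1: "l \<in> S" and "\<exists>r::nat\<Rightarrow>nat. strict_mono r \<and> (\<lambda>k. thompson C (f (r k)) l) \<longlonglongrightarrow> 0"
    by (rule bexE)
  then obtain r :: "nat \<Rightarrow> nat" where r: "strict_mono r" "(\<lambda>k. thompson C (f (r k)) l) \<longlonglongrightarrow> 0"
    by (elim exE conjE)
  note l = l1 r
  have d2: "\<delta>/2 > 0" using d by simp
  obtain k0 where k0: "\<And>k. k \<ge> k0 \<Longrightarrow> (\<exists>m>0. m < exp (\<delta>/2) \<and> end_le C (f (r k)) (m *\<^sub>R l)) \<and>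
                         (\<exists>m>0. m < exp (\<delta>/2) \<and> end_le C l (m *\<^sub>R f (r k)))"
    using conv_close[OF P SU l(1) f(1) l(3) d2] unfolding eventually_sequentially by blast
  define i where "i = r k0"
  define j where "j = r (Suc k0)"
  have ij: "i < j" unfolding i_def j_def using l(2) by (simp add: strict_mono_def)
  have K1: "(\<exists>m>0. m < exp (\<delta>/2) \<and> end_le C (f i) (m *\<^sub>R l)) \<and>
                         (\<exists>m>0. m < exp (\<delta>/2) \<and> end_le C l (m *\<^sub>R f i))" using k0[of k0] unfolding i_def by simp
  have K2: "(\<exists>m>0. m < exp (\<delta>/2) \<and> end_le C (f j) (m *\<^sub>R l)) \<and>
                         (\<exists>m>0. m < exp (\<delta>/2) \<and> end_le C l (m *\<^sub>R f j))" using k0[of "Suc k0"] unfolding j_def by simp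
  obtain m1 where m1a: "m1 > 0" "m1 < exp (\<delta>/2)" "end_le C (f i) (m1 *\<^sub>R l)" using K1 by blast
  obtain m1' where m1b: "m1' > 0" "m1' < exp (\<delta>/2)" "end_le C l (m1' *\<^sub>R f i)" using K1 by blast
  obtain m2 where m2a: "m2 > 0" "m2 < exp (\<delta>/2)" "end_le C (f j) (m2 *\<^sub>R l)" using K2 by blast
  obtain m2' where m2b: "m2' > 0" "m2' < exp (\<delta>/2)" "end_le C l (m2' *\<^sub>R f j)" using K2 by blast
  note m1 = m1a m1b
  note m2 = m2a m2b
  have ee: "exp (\<delta>/2) * exp (\<delta>/2) = exp \<delta>" by (simp add: exp_add[symmetric])
  have SE: "S \<subseteq> End_int C" using SU P unfolding in_same_part_def by blast
  have fiE: "f i \<in> End_int C" using f(1)[of i] SE by blast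
  have fjE: "f j \<in> End_int C" using f(1)[of j] SE by blast
  have X1: "end_le C (f i) ((m1 * m2') *\<^sub>R f j)" using end_le_chain[OF m1(3) m2(6)] m1 by simp
  have le1: "m1 * m2' \<le> exp \<delta>"
  proof -
    have "m1 * m2' < exp (\<delta>/2) * exp (\<delta>/2)" by (rule mult_strict_mono) (use m1 m2 in auto)
    then show ?thesis using ee by simp
  qed
  have 1: "end_le C (f i) (exp \<delta> *\<^sub>R f j)" using end_le_trans[OF X1 end_le_scalar[OF fjE le1]] .
  have X2: "end_le C (f j) ((m2 * m1') *\<^sub>R f i)" using end_le_chain[OF m2(3) m1(6)] m2 by simp
  have le2: "m2 * m1' \<le> exp \<delta>"
  proof -
    have "m2 * m1' < exp (\<delta>/2) * exp (\<delta>/2)" by (rule mult_strict_mono) (use m1 m2 in auto)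
    then show ?thesis using ee by simp
  qed
  have 2: "end_le C (f j) (exp \<delta> *\<^sub>R f i)" using end_le_trans[OF X2 end_le_scalar[OF fiE le2]] .
  have "cl (f i) (f j)" unfolding cl_def using 1 2 by blast
  then show False using f(2)[OF ij] by blast
qed

end


theorem corollary3:
  fixes C :: "(real ^ 'n) set" and \<A> \<B> :: "'n mat set"
  assumes "closed C" "convex C" "pointed_cone C"
    and "\<A> \<noteq> {}" "\<B> \<noteq> {}"
    and "in_same_part C (\<A> \<union> \<B>)"
    and "thompson_compact C \<A>" "thompson_compact C \<B>"
    and "h > 0"
  shows "\<exists>\<A>f \<B>f. finite \<A>f \<and> \<A>f \<noteq> {} \<and> \<A>f \<subseteq> \<A> \<and> finite \<B>f \<and> \<B>f \<noteq> {} \<and> \<B>f \<subseteq> \<B> \<and>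
           (\<exists>\<rho> \<rho>f. (\<forall>x0 \<in> interior C. is_game_value C \<A> \<B> x0 \<rho> \<and> is_game_value C \<A>f \<B>f x0 \<rho>f)
                  \<and> \<bar>\<rho> - \<rho>f\<bar> \<le> h)"
proof (cases "interior C = {}")
  case True
  obtain A0 where A0: "A0 \<in> \<A>" using assms(4) by blast
  obtain B0 where B0: "B0 \<in> \<B>" using assms(5) by blast
  have "\<exists>\<rho> \<rho>f::real. \<bar>\<rho> - \<rho>f\<bar> \<le> h" using assms(9) by (intro exI[of _ 0]) auto
  then show ?thesis
    by (rule_tac exI[of _ "{A0}"], rule_tac exI[of _ "{B0}"]) (use A0 B0 True in auto)
next
  case False
  interpret cset C using assms(1-3) False by unfold_locales
  define U where "U = \<A> \<union> \<B>"
  have P: "in_same_part C U" using assms(6) unfolding U_def .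
  have AU: "\<A> \<subseteq> U" and BU: "\<B> \<subseteq> U" unfolding U_def by auto
  have AE: "\<A> \<subseteq> End_int C" and BE: "\<B> \<subseteq> End_int C" using P AU BU unfolding in_same_part_def by auto
  obtain R0 where R0: "R0 \<in> \<A>" using assms(4) by blast
  have R0U: "R0 \<in> U" using R0 AU by blast
  have R0E: "R0 \<in> End_int C" using R0 AE by blast
  obtain LA where LA: "LA > 0" "\<forall>A\<in>\<A>. end_le C A (LA *\<^sub>R R0)" using part_upper[OF P AU assms(7) R0U] by blast
  obtain mA where mA: "mA > 0" "\<forall>A\<in>\<A>. end_le C (mA *\<^sub>R R0) A" using part_lower[OF P AU assms(7) R0U] by blast
  obtain LB where LB: "LB > 0" "\<forall>A\<in>\<B>. end_le C A (LB *\<^sub>R R0)" using part_upper[OF P BU assms(8) R0U] by blast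
  obtain mB where mB: "mB > 0" "\<forall>A\<in>\<B>. end_le C (mB *\<^sub>R R0) A" using part_lower[OF P BU assms(8) R0U] by blast
  have GM: "\<exists>c K. \<forall>\<A>' \<B>'. \<A>' \<noteq> {} \<longrightarrow> \<B>' \<noteq> {} \<longrightarrow> \<A>' \<subseteq> \<A> \<longrightarrow> \<B>' \<subseteq> \<B> \<longrightarrow> gm C x0 \<A>' \<B>' c K"
    if x0: "x0 \<in> interior C" for x0
  proof -
    have bA: "\<And>A. A \<in> \<A> \<Longrightarrow> end_le C (mA *\<^sub>R R0) A \<and> end_le C A (LA *\<^sub>R R0)" using mA(2) LA(2) by blast
    have bB: "\<And>A. A \<in> \<B> \<Longrightarrow> end_le C (mB *\<^sub>R R0) A \<and> end_le C A (LB *\<^sub>R R0)" using mB(2) LB(2) by blast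
    obtain cA KA where cA: "cA > 0" "KA > 0" "\<forall>A\<in>\<A>. cone_le C (cA *\<^sub>R x0) (x0 v* A) \<and> cone_le C (x0 v* A) (KA *\<^sub>R x0)"
      using vb_bounds[OF x0 R0E mA(1) LA(1) bA] by blast
    obtain cB KB where cB: "cB > 0" "KB > 0" "\<forall>A\<in>\<B>. cone_le C (cB *\<^sub>R x0) (x0 v* A) \<and> cone_le C (x0 v* A) (KB *\<^sub>R x0)"
      using vb_bounds[OF x0 R0E mB(1) LB(1) bB] by blast
    show ?thesis
    proof (intro exI allI impI)
      fix \<A>' \<B>' assume ne: "\<A>' \<noteq> {}" "\<B>' \<noteq> {}" and sub: "\<A>' \<subseteq> \<A>" "\<B>' \<subseteq> \<B>"
      show "gm C x0 \<A>' \<B>' (cA * cB) (KA * KB)"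
      proof (rule mk_gm[OF x0 ne])
        show "\<A>' \<subseteq> End_int C" "\<B>' \<subseteq> End_int C" using sub AE BE by auto
        show "cA > 0" "KA > 0" "cB > 0" "KB > 0" using cA cB by auto
        show "\<forall>A\<in>\<A>'. cone_le C (cA *\<^sub>R x0) (x0 v* A) \<and> cone_le C (x0 v* A) (KA *\<^sub>R x0)" using cA(3) sub by blast
        show "\<forall>B\<in>\<B>'. cone_le C (cB *\<^sub>R x0) (x0 v* B) \<and> cone_le C (x0 v* B) (KB *\<^sub>R x0)" using cB(3) sub by blast
      qed
    qed
  qed
  have net1: "\<exists>F. finite F \<and> F \<noteq> {} \<and> F \<subseteq> \<A> \<and> (\<forall>A\<in>\<A>. \<exists>A'\<in>F. end_le C A' (exp h *\<^sub>R A) \<and> end_le C A (exp h *\<^sub>R A'))"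
    by (rule part_net[OF P AU assms(7) assms(4) assms(9)])
  then obtain Af where Af0: "finite Af \<and> Af \<noteq> {} \<and> Af \<subseteq> \<A> \<and> (\<forall>A\<in>\<A>. \<exists>A'\<in>Af. end_le C A' (exp h *\<^sub>R A) \<and> end_le C A (exp h *\<^sub>R A'))"
    by (elim exE)
  have net2: "\<exists>F. finite F \<and> F \<noteq> {} \<and> F \<subseteq> \<B> \<and> (\<forall>A\<in>\<B>. \<exists>A'\<in>F. end_le C A' (exp h *\<^sub>R A) \<and> end_le C A (exp h *\<^sub>R A'))"
    by (rule part_net[OF P BU assms(8) assms(5) assms(9)])
  then obtain Bf where Bf0: "finite Bf \<and> Bf \<noteq> {} \<and> Bf \<subseteq> \<B> \<and> (\<forall>A\<in>\<B>. \<exists>A'\<in>Bf. end_le C A' (exp h *\<^sub>R A) \<and> end_le C A (exp h *\<^sub>R A'))"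
    by (elim exE)
  have Af: "finite Af" "Af \<noteq> {}" "Af \<subseteq> \<A>" "\<forall>A\<in>\<A>. \<exists>A'\<in>Af. end_le C A' (exp h *\<^sub>R A) \<and> end_le C A (exp h *\<^sub>R A')"
    using Af0 by simp_all
  have Bf: "finite Bf" "Bf \<noteq> {}" "Bf \<subseteq> \<B>" "\<forall>A\<in>\<B>. \<exists>A'\<in>Bf. end_le C A' (exp h *\<^sub>R A) \<and> end_le C A (exp h *\<^sub>R A')"
    using Bf0 by simp_all
  have nA: "\<forall>A\<in>\<A>. \<exists>A'\<in>Af. end_le C A' (exp h *\<^sub>R A)"
  proof
    fix A assume "A \<in> \<A>"
    then obtain A' where "A' \<in> Af" "end_le C A' (exp h *\<^sub>R A)" using Af(4) by auto
    then show "\<exists>A'\<in>Af. end_le C A' (exp h *\<^sub>R A)" by (rule bexI[rotated])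
  qed
  have nB: "\<forall>B\<in>\<B>. \<exists>B'\<in>Bf. end_le C B (exp h *\<^sub>R B')"
  proof
    fix B assume "B \<in> \<B>"
    then obtain B' where "B' \<in> Bf" "end_le C B (exp h *\<^sub>R B')" using Bf(4) by auto
    then show "\<exists>B'\<in>Bf. end_le C B (exp h *\<^sub>R B')" by (rule bexI[rotated])
  qed
  obtain xs where xs: "xs \<in> interior C" using False by blast
  have both: "gm C x0 \<A> \<B> c K \<and> gm C x0 Af Bf c K" if H: "\<forall>\<A>' \<B>'. \<A>' \<noteq> {} \<longrightarrow> \<B>' \<noteq> {} \<longrightarrow> \<A>' \<subseteq> \<A> \<longrightarrow> \<B>' \<subseteq> \<B> \<longrightarrow> gm C x0 \<A>' \<B>' c K" for x0 c K
  proof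
    show "gm C x0 \<A> \<B> c K" using H assms(4,5) by simp
    show "gm C x0 Af Bf c K" using H Af(2,3) Bf(2,3) by simp
  qed
  from GM[OF xs] obtain cs Ks where Hs: "\<forall>\<A>' \<B>'. \<A>' \<noteq> {} \<longrightarrow> \<B>' \<noteq> {} \<longrightarrow> \<A>' \<subseteq> \<A> \<longrightarrow> \<B>' \<subseteq> \<B> \<longrightarrow> gm C xs \<A>' \<B>' cs Ks"
    by (elim exE)
  have Gs: "gm C xs \<A> \<B> cs Ks" "gm C xs Af Bf cs Ks" using both[OF Hs] by auto
  have val: "is_game_value C \<A> \<B> x0 (rho C \<A> \<B> xs) \<and> is_game_value C Af Bf x0 (rho C Af Bf xs)"
    if x0: "x0 \<in> interior C" for x0
  proof -
    from GM[OF x0] obtain c K where H0: "\<forall>\<A>' \<B>'. \<A>' \<noteq> {} \<longrightarrow> \<B>' \<noteq> {} \<longrightarrow> \<A>' \<subseteq> \<A> \<longrightarrow> \<B>' \<subseteq> \<B> \<longrightarrow> gm C x0 \<A>' \<B>' c K"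
      by (elim exE)
    have G: "gm C x0 \<A> \<B> c K" "gm C x0 Af Bf c K" using both[OF H0] by auto
    have e1: "rho C \<A> \<B> x0 = rho C \<A> \<B> xs" using rho_mono_x[OF G(1) Gs(1)] rho_mono_x[OF Gs(1) G(1)] by simp
    have e2: "rho C Af Bf x0 = rho C Af Bf xs" using rho_mono_x[OF G(2) Gs(2)] rho_mono_x[OF Gs(2) G(2)] by simp
    show ?thesis using gm.game_value[OF G(1)] gm.game_value[OF G(2)] e1 e2 by simp
  qed
  have cmp: "\<bar>rho C \<A> \<B> xs - rho C Af Bf xs\<bar> \<le> h"
    using rho_compare[OF Gs(1) Gs(2) Af(3) Bf(3) nA nB] .
  show ?thesis
  proof (rule exI[of _ Af], rule exI[of _ Bf], intro conjI)
    show "\<exists>\<rho> \<rho>f. (\<forall>x0 \<in> interior C. is_game_value C \<A> \<B> x0 \<rho> \<and> is_game_value C Af Bf x0 \<rho>f) \<and> \<bar>\<rho> - \<rho>f\<bar> \<le> h"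
      using val cmp by (intro exI[of _ "rho C \<A> \<B> xs"] exI[of _ "rho C Af Bf xs"]) simp
  qed (use Af(1-3) Bf(1-3) in auto)
qed


end
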